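(* Let $(q_n),(r_n)$ be complex sequences vanishing faster than any negative power of $|n|$ as $n\to\pm\infty$, with $1-q_nr_n\ne0$ and $1+q_nr_{n+1}\neq0$ for all $n\in\mathbb Z$. Let $T$ and $\bar T$ be the transmission coefficients (with their meromorphic extensions to $|z|<1$ and $|z|>1$, respectively) of the system $$\begin{bmatrix}\alpha_n\\ \beta_n\end{bmatrix}=\begin{bmatrix} z & (z-z^{-1})q_n\\ z\,r_n & z^{-1}+(z-z^{-1})q_nr_n\end{bmatrix}\begin{bmatrix}\alpha_{n+1}\\ \beta_{n+1}\end{bmatrix}.$$ Then $$T=\frac1{D_\infty}\big[1-z^2S_\infty+O(z^4)\big],\quad z\to0,\qquad \bar T=\frac1{E_\infty}\Big[1-\frac1{z^2}Q_\infty+O(z^{-4})\Big],\quad z\to\infty,$$ where $D_\infty=\prod_{j\in\mathbb Z}(1-q_jr_j)$, $E_\infty=\prod_{j\in\mathbb Z}(1+q_jr_{j+1})$, $$S_\infty=\sum_{k=-\infty}^{\infty}\frac{r_k(q_k-q_{k+1}-q_kq_{k+1}r_{k+1})}{(1-q_kr_k)(1-q_{k+1}r_{k+1})},\qquad Q_\infty=\sum_{k=-\infty}^{\infty}\frac{r_{k+2}(q_k-q_{k+1}-q_kq_{k+1}r_{k+1})}{(1+q_kr_{k+1})(1+q_{k+1}r_{k+2})}.$$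
   Context: For $|z|=1$ the Jost solution $\psi_n$ is the solution with $\psi_n=\begin{bmatrix}o(1)\\ z^n[1+o(1)]\end{bmatrix}$ as $n\to+\infty$, and $\bar\psi_n$ the solution with $\bar\psi_n=\begin{bmatrix}z^{-n}[1+o(1)]\\ o(1)\end{bmatrix}$ as $n\to+\infty$ (overbar is not complex conjugation). The transmission coefficients $T$, $\bar T$ are defined on $|z|=1$ by: the second component of $\psi_n$ equals $(1/T)z^n[1+o(1)]$ as $n\to-\infty$, and the first component of $\bar\psi_n$ equals $(1/\bar T)z^{-n}[1+o(1)]$ as $n\to-\infty$. (For this system the left and right transmission coefficients coincide.) *)

theory Defs
  imports "HOL-Analysis.Analysis" "HOL-Library.Landau_Symbols"
begin

definition AL_sol :: "(int \<Rightarrow> complex) \<Rightarrow> (int \<Rightarrow> complex) \<Rightarrow> complex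
    \<Rightarrow> (int \<Rightarrow> complex) \<times> (int \<Rightarrow> complex) \<Rightarrow> bool" where
  "AL_sol q r z ab \<longleftrightarrow>
     (\<forall>n. fst ab n = z * fst ab (n+1) + (z - inverse z) * q n * snd ab (n+1)
        \<and> snd ab n = z * r n * fst ab (n+1)
                     + (inverse z + (z - inverse z) * q n * r n) * snd ab (n+1))"

text \<open>Jost solution psi: z^(-n) psi_n \<rightarrow> (0,1) as n \<rightarrow> +\<infinity>
  (for |z| = 1 this is psi_n = (o(1), z^n (1+o(1)))).\<close>
definition jost_psi :: "(int \<Rightarrow> complex) \<Rightarrow> (int \<Rightarrow> complex) \<Rightarrow> complex
    \<Rightarrow> (int \<Rightarrow> complex) \<times> (int \<Rightarrow> complex)" where
  "jost_psi q r z = (THE ab. AL_sol q r z ab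
      \<and> ((\<lambda>n. z powi (-n) * fst ab n) \<longlongrightarrow> 0) at_top
      \<and> ((\<lambda>n. z powi (-n) * snd ab n) \<longlongrightarrow> 1) at_top)"

text \<open>Jost solution psi-bar: z^n psi-bar_n \<rightarrow> (1,0) as n \<rightarrow> +\<infinity>
  (for |z| = 1 this is psi-bar_n = (z^(-n) (1+o(1)), o(1))).\<close>
definition jost_psibar :: "(int \<Rightarrow> complex) \<Rightarrow> (int \<Rightarrow> complex) \<Rightarrow> complex
    \<Rightarrow> (int \<Rightarrow> complex) \<times> (int \<Rightarrow> complex)" where
  "jost_psibar q r z = (THE ab. AL_sol q r z ab
      \<and> ((\<lambda>n. z powi n * fst ab n) \<longlongrightarrow> 1) at_top
      \<and> ((\<lambda>n. z powi n * snd ab n) \<longlongrightarrow> 0) at_top)"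

text \<open>On |z| = 1 this is the defining
  asymptotics; for 0 < |z| < 1 (resp. |z| > 1) the same formula gives the
  analytic (meromorphic) continuation of T (resp. Tbar).\<close>
definition transT :: "(int \<Rightarrow> complex) \<Rightarrow> (int \<Rightarrow> complex) \<Rightarrow> complex \<Rightarrow> complex" where
  "transT q r z = 1 / Lim at_bot (\<lambda>n. z powi (-n) * snd (jost_psi q r z) n)"

definition transTbar :: "(int \<Rightarrow> complex) \<Rightarrow> (int \<Rightarrow> complex) \<Rightarrow> complex \<Rightarrow> complex" where
  "transTbar q r z = 1 / Lim at_bot (\<lambda>n. z powi n * fst (jost_psibar q r z) n)"

definition int_prod :: "(int \<Rightarrow> complex) \<Rightarrow> complex" where
  "int_prod f = lim (\<lambda>N::nat. \<Prod>j\<in>{-int N..int N}. f j)"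

end

theory Submission
  imports Defs
begin


lemma sumC:
  fixes f :: "'a \<Rightarrow> complex" and \<kappa> :: "'a \<Rightarrow> real"
  assumes "\<kappa> summable_on A" "\<And>k. k \<in> A \<Longrightarrow> norm (f k) \<le> C * \<kappa> k"
  shows "f summable_on A"
proof -
  have "(\<lambda>k. C * \<kappa> k) summable_on A" using assms(1) by (rule summable_on_cmult_right)
  then have "(\<lambda>k. norm (f k)) summable_on A"
    by (rule Infinite_Sum.abs_summable_on_comparison_test') (use assms(2) in auto)
  then show ?thesis using summable_on_iff_abs_summable_on_complex by blast
qed

lemma normC:
  fixes f :: "'a \<Rightarrow> complex" and \<kappa> :: "'a \<Rightarrow> real"
  assumes "\<kappa> summable_on A" "\<And>k. k \<in> A \<Longrightarrow> norm (f k) \<le> C * \<kappa> k"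
  shows "norm (infsum f A) \<le> C * infsum \<kappa> A"
proof -
  have s: "(\<lambda>k. C * \<kappa> k) summable_on A" using assms(1) by (rule summable_on_cmult_right)
  then have n: "(\<lambda>k. norm (f k)) summable_on A"
    by (rule Infinite_Sum.abs_summable_on_comparison_test') (use assms(2) in auto)
  have "norm (infsum f A) \<le> infsum (\<lambda>k. norm (f k)) A"
    by (rule norm_infsum_bound) (use n in auto)
  also have "\<dots> \<le> infsum (\<lambda>k. C * \<kappa> k) A"
    by (rule infsum_mono[OF n s]) (use assms(2) in auto)
  also have "\<dots> = C * infsum \<kappa> A" by (rule infsum_cmult_right') 
  finally show ?thesis .
qed

lemma infsum_diff_c:
  fixes f g :: "'a \<Rightarrow> complex"
  assumes "f summable_on A" "g summable_on A"
  shows "infsum (\<lambda>k. f k - g k) A = infsum f A - infsum g A"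
proof -
  have "(\<lambda>k. - g k) summable_on A" using assms(2) summable_on_uminus by blast
  then have "infsum (\<lambda>k. f k + - g k) A = infsum f A + infsum (\<lambda>k. - g k) A"
    using infsum_add[OF assms(1)] by blast
  then show ?thesis by (simp add: infsum_uminus)
qed

lemma infsum_split_int:
  fixes f :: "int \<Rightarrow> 'b::{topological_comm_monoid_add, t2_space}"
  assumes "f summable_on {n+1..}"
  shows "infsum f {n..} = f n + infsum f {n+1..}"
proof -
  have "{n..} = insert n {n+1..}" by auto
  then show ?thesis using infsum_insert[OF assms] by simp
qed

lemma tail_nonneg_le:
  fixes \<kappa> :: "int \<Rightarrow> real"
  assumes "\<kappa> summable_on UNIV" "\<And>k. \<kappa> k \<ge> 0"
  shows "infsum \<kappa> A \<le> infsum \<kappa> UNIV"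
  by (rule infsum_mono_neutral) (use assms summable_on_subset_banach[OF assms(1)] in auto)

lemma tail_top:
  fixes \<kappa> :: "int \<Rightarrow> real"
  assumes "\<kappa> summable_on UNIV" "\<And>k. \<kappa> k \<ge> 0"
  shows "((\<lambda>n. infsum \<kappa> {n..}) \<longlongrightarrow> 0) at_top"
proof (rule tendstoI)
  fix e :: real assume e: "e > 0"
  obtain F where F: "finite F" "dist (sum \<kappa> F) (infsum \<kappa> UNIV) \<le> e/2"
    using infsum_finite_approximation[OF assms(1), of "e/2"] e by auto
  have sF: "\<kappa> summable_on (UNIV - F)" using assms(1) summable_on_subset_banach by blast
  have split: "infsum \<kappa> UNIV = infsum \<kappa> F + infsum \<kappa> (UNIV - F)"
    using infsum_Un_disjoint[of \<kappa> F "UNIV - F"] F(1) sF by (simp add: Un_absorb1)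
  have "eventually (\<lambda>n. \<forall>x\<in>F. x < n) at_top"
    using F(1) by (simp add: eventually_ball_finite eventually_gt_at_top)
  then show "eventually (\<lambda>n. dist (infsum \<kappa> {n..}) 0 < e) at_top"
  proof eventually_elim
    case (elim n)
    have sub: "{n..} \<subseteq> UNIV - F" using elim by force
    have ge: "infsum \<kappa> {n..} \<ge> 0" by (rule infsum_nonneg) (use assms in auto)
    have "infsum \<kappa> {n..} \<le> infsum \<kappa> (UNIV - F)"
      by (rule infsum_mono_neutral) (use sF sub assms summable_on_subset_banach in auto)
    also have "\<dots> \<le> e/2" using F(2) split F(1) by (simp add: dist_real_def)
    finally show ?case using ge e by (simp add: dist_real_def)
  qed
qed

lemma tail_bot:
  fixes G :: "int \<Rightarrow> complex"
  assumes "G summable_on UNIV"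
  shows "((\<lambda>n. infsum G {n..}) \<longlongrightarrow> infsum G UNIV) at_bot"
proof (rule tendstoI)
  fix e :: real assume e: "e > 0"
  have nG: "(\<lambda>k. norm (G k)) summable_on UNIV"
    using assms summable_on_iff_abs_summable_on_complex by blast
  obtain F where F: "finite F" "dist (sum (\<lambda>k. norm (G k)) F) (infsum (\<lambda>k. norm (G k)) UNIV) \<le> e/2"
    using infsum_finite_approximation[OF nG, of "e/2"] e by auto
  have sF: "(\<lambda>k. norm (G k)) summable_on (UNIV - F)" using nG summable_on_subset_banach by blast
  have split: "infsum (\<lambda>k. norm (G k)) UNIV = infsum (\<lambda>k. norm (G k)) F + infsum (\<lambda>k. norm (G k)) (UNIV - F)"
    using infsum_Un_disjoint[of _ F "UNIV - F"] F(1) sF by (simp add: Un_absorb1)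
  have "eventually (\<lambda>n. \<forall>x\<in>F. n \<le> x) at_bot"
    using F(1) by (simp add: eventually_ball_finite eventually_le_at_bot)
  then show "eventually (\<lambda>n. dist (infsum G {n..}) (infsum G UNIV) < e) at_bot"
  proof eventually_elim
    case (elim n)
    have sub: "{..<n} \<subseteq> UNIV - F" using elim by force
    have s1: "G summable_on {..<n}" "G summable_on {n..}" using assms summable_on_subset_banach by blast+
    have u: "UNIV = {..<n} \<union> {n..}" by auto
    have d: "{..<n} \<inter> {n..} = {}" by auto
    have "infsum G UNIV = infsum G {..<n} + infsum G {n..}"
      using infsum_Un_disjoint[OF s1 d] u by metis
    then have "dist (infsum G {n..}) (infsum G UNIV) = norm (infsum G {..<n})"
      by (simp add: dist_norm norm_minus_commute)
    also have "\<dots> \<le> infsum (\<lambda>k. norm (G k)) {..<n}"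
      by (rule norm_infsum_bound) (use nG summable_on_subset_banach in blast)
    also have "\<dots> \<le> infsum (\<lambda>k. norm (G k)) (UNIV - F)"
      by (rule infsum_mono_neutral) (use sF sub nG summable_on_subset_banach in auto)
    also have "\<dots> \<le> e/2" using F(2) split F(1) by (simp add: dist_real_def)
    finally show ?case using e by simp
  qed
qed


lemma geom_conv:
  fixes f :: "nat \<Rightarrow> complex"
  assumes d: "\<And>j. norm (f (Suc j) - f j) \<le> M / 2^j"
  shows "f \<longlonglongrightarrow> lim f" "\<And>j. norm (f j - lim f) \<le> 2 * M / 2^j"
proof -
  define d where "d j = f (Suc j) - f j" for j
  have g: "summable (\<lambda>j. M * (1/2)^j)" by (intro summable_mult summable_geometric) auto
  have nd: "norm (d j) \<le> M * (1/2)^j" for j using d[of j] by (simp add: d_def power_one_over)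
  have sd: "summable d"
    by (rule summable_comparison_test[OF _ g]) (use nd in auto)
  have fj: "f j = f 0 + (\<Sum>i<j. d i)" for j
    unfolding d_def sum_lessThan_telescope by simp
  have "(\<lambda>j. f 0 + (\<Sum>i<j. d i)) \<longlonglongrightarrow> f 0 + suminf d"
    by (rule tendsto_add[OF tendsto_const summable_LIMSEQ[OF sd]])
  moreover have "(\<lambda>j. f 0 + (\<Sum>i<j. d i)) = f" by (rule ext) (rule fj[symmetric])
  ultimately have lim1: "f \<longlonglongrightarrow> f 0 + suminf d" by simp
  then have L: "lim f = f 0 + suminf d" by (rule limI)
  show "f \<longlonglongrightarrow> lim f" using lim1 L by simp
  fix j
  have sdj: "summable (\<lambda>i. d (i + j))" using sd by (rule summable_ignore_initial_segment)
  have "suminf d = (\<Sum>i. d (i + j)) + sum d {..<j}"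
    by (rule suminf_split_initial_segment[OF sd])
  then have "f j - lim f = - (\<Sum>i. d (i + j))" unfolding L by (subst fj[of j]) simp
  then have "norm (f j - lim f) = norm (\<Sum>i. d (i + j))" by simp
  also have "\<dots> \<le> (\<Sum>i. M / 2^j * (1/2)^i)"
  proof (rule norm_suminf_le)
    show "norm (d (i + j)) \<le> M / 2^j * (1/2)^i" for i
      using nd[of "i+j"] by (simp add: power_add power_one_over mult.commute)
    show "summable (\<lambda>i. M / 2 ^ j * (1 / 2) ^ i)" by (intro summable_mult summable_geometric) auto
  qed
  also have "\<dots> = 2 * M / 2^j"
    using suminf_mult[of "\<lambda>i. (1/2::real)^i" "M/2^j"] suminf_geometric[of "1/2::real"]
    by (simp add: summable_geometric)
  finally show "norm (f j - lim f) \<le> 2 * M / 2^j" .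
qed

lemma geom_tendsto:
  fixes X :: "nat \<Rightarrow> complex"
  assumes "\<And>j. norm (X j - L) \<le> C / 2^j"
  shows "X \<longlonglongrightarrow> L"
proof -
  have "(\<lambda>j. C * (1/2)^j) \<longlonglongrightarrow> C * 0"
    by (intro tendsto_mult tendsto_const LIMSEQ_power_zero) auto
  then have z: "(\<lambda>j. C / 2^j) \<longlonglongrightarrow> 0" by (simp add: power_one_over)
  have "(\<lambda>j. X j - L) \<longlonglongrightarrow> 0" by (rule Lim_null_comparison[OF _ z]) (use assms in auto)
  then show ?thesis by (simp add: LIM_zero_iff)
qed


lemma tri3: "norm (x + y + z) \<le> norm x + norm y + (norm (z::complex))"
  by (smt (verit) norm_triangle_ineq)

lemma tri4: "norm (x + y + z + v) \<le> norm x + norm y + norm z + (norm (v::complex))"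
  by (smt (verit) norm_triangle_ineq)

lemma alg1:
  fixes t t1 u1 w a a0 lam :: complex
  assumes "lam \<noteq> 0" "t = (w * t1 + a * u1) / lam"
  shows "t - a0 / lam = (w * t1 + a * (u1 - 1) + (a - a0)) / lam"
  using assms by (simp add: field_simps)

lemma alg2:
  fixes c c0 b b0 u t X a0l lam :: complex
  assumes "lam \<noteq> 0"
  shows "(c * u + b * t) / lam - (c0 + b0 * a0l) / lam =
     (c * (u - 1) + (c - c0) + (b - b0) * t + b0 * (t - a0l)) / lam"
  using assms by (simp add: field_simps)

locale picard =
  fixes w :: complex and lam a b c :: "int \<Rightarrow> complex" and \<kappa> :: "int \<Rightarrow> real" and \<delta> E :: real
  assumes kpos: "\<And>n. 0 \<le> \<kappa> n" and ksum: "\<kappa> summable_on UNIV" and E_def: "E = infsum \<kappa> UNIV"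
    and dpos: "0 < \<delta>" and lamb: "\<And>n. \<delta> \<le> norm (lam n)"
    and abnd: "\<And>n. norm (a n) \<le> \<kappa> n" and bbnd: "\<And>n. norm (b n) \<le> \<kappa> n"
    and cbnd: "\<And>n. norm (c n) \<le> \<kappa> n"
    and sm1: "norm w * (2/\<delta> + (2*(1 + 2/\<delta>*E)/\<delta>) * E) \<le> 1"
    and sm2: "4 * norm w \<le> \<delta>"
    and sm3: "2 * norm w * E * (1 + 4*E/\<delta>) \<le> \<delta>"
    and sm4: "norm w * E \<le> \<delta>"
begin

definition "Ct = 2/\<delta>"
definition "Cu = 2*(1 + Ct*E)/\<delta>"
definition "Mt = 4*E/\<delta>"
definition e where "e n = infsum \<kappa> {n..}"
definition g where "g x k = (c k * snd x (k+1) + b k * fst x (k+1)) / lam k"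
definition Phi where "Phi x = ((\<lambda>n. (w * fst x (n+1) + a n * snd x (n+1)) / lam n),
                               (\<lambda>n. 1 + w * infsum (g x) {n..}))"

primrec it :: "nat \<Rightarrow> (int \<Rightarrow> complex) \<times> (int \<Rightarrow> complex)" where
  "it 0 = ((\<lambda>n. 0), (\<lambda>n. 1))"
| "it (Suc j) = Phi (it j)"

lemma ksub: "\<kappa> summable_on A"
  using summable_on_subset_banach[OF ksum] by blast

lemma E_nonneg: "0 \<le> E"
  unfolding E_def by (rule infsum_nonneg) (use kpos in auto)

lemma e_nonneg: "0 \<le> e n"
  unfolding e_def by (rule infsum_nonneg) (use kpos in auto)

lemma e_le_E: "e n \<le> E"
  unfolding e_def E_def by (rule tail_nonneg_le[OF ksum kpos])

lemma e_split: "e n = \<kappa> n + e (n+1)"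
  unfolding e_def by (rule infsum_split_int[OF ksub])

lemma k_le_e: "\<kappa> n \<le> e n"
  using e_split[of n] e_nonneg[of "n+1"] by simp

lemma e_succ: "e (n+1) \<le> e n"
  using e_split[of n] kpos[of n] by simp

lemma k_le_E: "\<kappa> n \<le> E"
  using k_le_e[of n] e_le_E[of n] by simp

lemma lam_nz: "lam n \<noteq> 0"
  using lamb[of n] dpos by auto

lemma Ct_nonneg: "0 \<le> Ct" unfolding Ct_def using dpos by simp
lemma Cu_nonneg: "0 \<le> Cu" unfolding Cu_def using dpos Ct_nonneg E_nonneg by simp
lemma Mt_nonneg: "0 \<le> Mt" unfolding Mt_def using dpos E_nonneg by simp

lemma div_lam_bound:
  assumes "norm z \<le> B"
  shows "norm (z / lam n) \<le> B / \<delta>"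
proof -
  have "norm (z / lam n) = norm z / norm (lam n)" by (simp add: norm_divide)
  also have "\<dots> \<le> B / \<delta>"
    by (rule frac_le) (use assms dpos lamb[of n] order_trans[OF norm_ge_zero assms] in auto)
  finally show ?thesis .
qed

lemma g_bound:
  assumes "\<And>m. norm (fst x m) \<le> T" "\<And>m. norm (snd x m) \<le> U"
  shows "norm (g x k) \<le> ((U + T)/\<delta>) * \<kappa> k"
proof -
  have "norm (c k * snd x (k+1) + b k * fst x (k+1)) \<le> norm (c k) * norm (snd x (k+1)) + norm (b k) * norm (fst x (k+1))"
    by (metis norm_mult norm_triangle_ineq)
  also have "\<dots> \<le> \<kappa> k * U + \<kappa> k * T"
    by (intro add_mono mult_mono assms cbnd bbnd kpos) auto
  finally have "norm (g x k) \<le> (\<kappa> k * U + \<kappa> k * T) / \<delta>"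
    unfolding g_def by (rule div_lam_bound)
  then show ?thesis by (simp add: algebra_simps)
qed

lemma g_diff_bound:
  assumes "\<And>m. norm (fst x m - fst y m) \<le> T" "\<And>m. norm (snd x m - snd y m) \<le> U"
  shows "norm (g x k - g y k) \<le> ((U + T)/\<delta>) * \<kappa> k"
proof -
  have eq: "g x k - g y k = (c k * (snd x (k+1) - snd y (k+1)) + b k * (fst x (k+1) - fst y (k+1))) / lam k"
    unfolding g_def using lam_nz[of k] by (simp add: field_simps)
  have "norm (c k * (snd x (k+1) - snd y (k+1)) + b k * (fst x (k+1) - fst y (k+1)))
        \<le> norm (c k) * norm (snd x (k+1) - snd y (k+1)) + norm (b k) * norm (fst x (k+1) - fst y (k+1))"
    by (metis norm_mult norm_triangle_ineq)
  also have "\<dots> \<le> \<kappa> k * U + \<kappa> k * T"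
    by (intro add_mono mult_mono assms cbnd bbnd kpos) auto
  finally have "norm (g x k - g y k) \<le> (\<kappa> k * U + \<kappa> k * T) / \<delta>"
    unfolding eq by (rule div_lam_bound)
  then show ?thesis by (simp add: algebra_simps)
qed

lemma g_summable:
  assumes "\<And>m. norm (fst x m) \<le> T" "\<And>m. norm (snd x m) \<le> U"
  shows "g x summable_on A"
  by (rule sumC[OF ksub, where C = "(U+T)/\<delta>"]) (use g_bound[OF assms] in auto)

lemma g_tail_bound:
  assumes "\<And>m. norm (fst x m) \<le> T" "\<And>m. norm (snd x m) \<le> U"
  shows "norm (infsum (g x) {n..}) \<le> ((U + T)/\<delta>) * e n"
  unfolding e_def by (rule normC[OF ksub]) (use g_bound[OF assms] in auto)

lemma sm1': "norm w * Ct + norm w * Cu * E \<le> 1"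
  using sm1 unfolding Cu_def Ct_def by (simp add: algebra_simps)

lemma inv1:
  "norm (fst (it j) n) \<le> Ct * e n \<and> norm (snd (it j) n - 1) \<le> Cu * norm w * e n"
proof (induction j arbitrary: n)
  case 0
  then show ?case using Ct_nonneg Cu_nonneg e_nonneg[of n] by simp
next
  case (Suc j)
  define t where "t = fst (it j)"
  define u where "u = snd (it j)"
  have tb: "norm (t m) \<le> Ct * E" for m
    using Suc.IH[of m] mult_left_mono[OF e_le_E[of m] Ct_nonneg] unfolding t_def by linarith
  have ub: "norm (u m) \<le> 1 + Cu * norm w * E" for m
  proof -
    have "norm (u m) \<le> 1 + norm (u m - 1)" by (metis add.commute diff_add_cancel norm_one norm_triangle_ineq)
    also have "\<dots> \<le> 1 + Cu * norm w * e m" using Suc.IH[of m] unfolding u_def by simp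
    also have "\<dots> \<le> 1 + Cu * norm w * E"
      using mult_left_mono[OF e_le_E, of "Cu * norm w" m] Cu_nonneg by simp
    finally show ?thesis .
  qed
  have w1: "norm w * Ct + (1 + Cu * norm w * E) \<le> 2" using sm1' by (simp add: algebra_simps)
  have f: "norm (fst (it (Suc j)) n) \<le> Ct * e n"
  proof -
    have "norm (w * t (n+1) + a n * u (n+1)) \<le> norm w * norm (t (n+1)) + norm (a n) * norm (u (n+1))"
      by (metis norm_mult norm_triangle_ineq)
    also have "\<dots> \<le> norm w * (Ct * e n) + e n * (1 + Cu * norm w * E)"
    proof (intro add_mono mult_mono)
      show "norm (t (n + 1)) \<le> Ct * e n"
        using Suc.IH[of "n+1"] mult_left_mono[OF e_succ Ct_nonneg, of n] unfolding t_def by linarith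
      show "norm (a n) \<le> e n" using abnd[of n] k_le_e[of n] by simp
    qed (use ub e_nonneg in auto)
    also have "\<dots> = e n * (norm w * Ct + (1 + Cu * norm w * E))" by (simp add: algebra_simps)
    also have "\<dots> \<le> e n * 2" by (rule mult_left_mono[OF w1 e_nonneg])
    finally have "norm (fst (it (Suc j)) n) \<le> e n * 2 / \<delta>"
      by (simp add: Phi_def t_def u_def div_lam_bound)
    then show ?thesis unfolding Ct_def by (simp add: mult.commute)
  qed
  have s: "norm (snd (it (Suc j)) n - 1) \<le> Cu * norm w * e n"
  proof -
    have "snd (it (Suc j)) n - 1 = w * infsum (g (it j)) {n..}" by (simp add: Phi_def)
    then have "norm (snd (it (Suc j)) n - 1) = norm w * norm (infsum (g (it j)) {n..})"
      by (simp add: norm_mult)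
    also have "\<dots> \<le> norm w * ((((1 + Cu * norm w * E) + Ct * E)/\<delta>) * e n)"
      by (intro mult_left_mono g_tail_bound) (use tb ub in \<open>auto simp: t_def u_def\<close>)
    also have "\<dots> \<le> norm w * (Cu * e n)"
    proof (intro mult_left_mono)
      have "Cu * norm w * E \<le> 1" using sm1' Ct_nonneg by (simp add: algebra_simps)
        (smt (verit) mult_nonneg_nonneg norm_ge_zero)
      moreover have "0 \<le> Ct * E" using Ct_nonneg E_nonneg by simp
      ultimately have h: "1 + Cu * norm w * E + Ct * E \<le> 2*(1 + Ct*E)" by (simp add: algebra_simps)
      have "(1 + Cu * norm w * E + Ct * E)/\<delta> \<le> 2*(1 + Ct*E)/\<delta>"
        by (rule divide_right_mono[OF h]) (use dpos in simp)
      then have "(1 + Cu * norm w * E + Ct * E)/\<delta> \<le> Cu" unfolding Cu_def .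
      then show "((1 + Cu * norm w * E + Ct * E)/\<delta>) * e n \<le> Cu * e n"
        by (rule mult_right_mono[OF _ e_nonneg])
    qed auto
    finally show ?thesis by (simp add: algebra_simps)
  qed
  show ?case using f s by simp
qed


lemma it_tb: "norm (fst (it j) m) \<le> Ct * E"
  using inv1[of j m] mult_left_mono[OF e_le_E[of m] Ct_nonneg] by linarith

lemma it_ub: "norm (snd (it j) m) \<le> 1 + Cu * norm w * E"
proof -
  have "norm (snd (it j) m) \<le> 1 + norm (snd (it j) m - 1)"
    by (metis add.commute diff_add_cancel norm_one norm_triangle_ineq)
  also have "\<dots> \<le> 1 + Cu * norm w * e m" using inv1[of j m] by simp
  also have "\<dots> \<le> 1 + Cu * norm w * E"
    using mult_left_mono[OF e_le_E, of "Cu * norm w" m] Cu_nonneg by simp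
  finally show ?thesis .
qed

lemma g_it_summable: "g (it j) summable_on A"
  by (rule g_summable[OF it_tb it_ub])

lemma inv2:
  "norm (fst (it (Suc j)) n - fst (it j) n) \<le> Mt / 2^j \<and>
   norm (snd (it (Suc j)) n - snd (it j) n) \<le> 1 / 2^j"
proof (induction j arbitrary: n)
  case 0
  have f: "norm (fst (it (Suc 0)) n - fst (it 0) n) \<le> Mt"
  proof -
    have "fst (it (Suc 0)) n - fst (it 0) n = a n / lam n" by (simp add: Phi_def)
    moreover have "norm (a n / lam n) \<le> E / \<delta>"
      by (rule div_lam_bound) (use abnd[of n] k_le_E[of n] in simp)
    moreover have "E / \<delta> \<le> Mt" unfolding Mt_def using E_nonneg dpos by (simp add: divide_right_mono)
    ultimately show ?thesis by simp
  qed
  have s: "norm (snd (it (Suc 0)) n - snd (it 0) n) \<le> 1"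
  proof -
    have "snd (it (Suc 0)) n - snd (it 0) n = w * infsum (g (it 0)) {n..}" by (simp add: Phi_def)
    then have "norm (snd (it (Suc 0)) n - snd (it 0) n) = norm w * norm (infsum (g (it 0)) {n..})"
      by (simp add: norm_mult)
    also have "\<dots> \<le> norm w * (((1 + 0)/\<delta>) * e n)"
      by (intro mult_left_mono g_tail_bound) auto
    also have "\<dots> \<le> norm w * (E / \<delta>)"
      by (intro mult_left_mono) (use e_le_E[of n] dpos in \<open>auto simp: divide_right_mono\<close>)
    also have "\<dots> \<le> 1" using sm4 dpos by (simp add: field_simps)
    finally show ?thesis .
  qed
  show ?case using f s by simp
next
  case (Suc j)
  define x where "x = it (Suc j)"
  define y where "y = it j"
  have dt: "\<And>m. norm (fst x m - fst y m) \<le> Mt / 2^j" using Suc.IH unfolding x_def y_def by blast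
  have du: "\<And>m. norm (snd x m - snd y m) \<le> 1 / 2^j" using Suc.IH unfolding x_def y_def by blast
  have f: "norm (fst (it (Suc (Suc j))) n - fst (it (Suc j)) n) \<le> Mt / 2^(Suc j)"
  proof -
    have eq: "fst (it (Suc (Suc j))) n - fst (it (Suc j)) n
       = (w * (fst x (n+1) - fst y (n+1)) + a n * (snd x (n+1) - snd y (n+1))) / lam n"
      unfolding x_def y_def using lam_nz[of n] by (simp add: Phi_def field_simps)
    have "norm (w * (fst x (n+1) - fst y (n+1)) + a n * (snd x (n+1) - snd y (n+1)))
        \<le> norm w * norm (fst x (n+1) - fst y (n+1)) + norm (a n) * norm (snd x (n+1) - snd y (n+1))"
      by (metis norm_mult norm_triangle_ineq)
    also have "\<dots> \<le> norm w * (Mt / 2^j) + E * (1 / 2^j)"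
      by (intro add_mono mult_mono dt du) (use abnd[of n] k_le_E[of n] E_nonneg in auto)
    also have "\<dots> = (norm w * Mt + E) / 2^j" by (simp add: field_simps)
    also have "\<dots> \<le> (2 * E) / 2^j"
    proof -
      have "norm w * Mt \<le> E" unfolding Mt_def using sm2 dpos E_nonneg
        by (simp add: field_simps) (metis mult.assoc mult.commute mult_right_mono)
      then show ?thesis by (simp add: divide_right_mono)
    qed
    finally have "norm (fst (it (Suc (Suc j))) n - fst (it (Suc j)) n) \<le> (2 * E) / 2^j / \<delta>"
      unfolding eq by (rule div_lam_bound)
    also have "\<dots> = Mt / 2^(Suc j)" unfolding Mt_def by (simp add: field_simps)
    finally show ?thesis .
  qed
  have s: "norm (snd (it (Suc (Suc j))) n - snd (it (Suc j)) n) \<le> 1 / 2^(Suc j)"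
  proof -
    have "snd (it (Suc (Suc j))) n - snd (it (Suc j)) n = w * (infsum (g x) {n..} - infsum (g y) {n..})"
      unfolding x_def y_def by (simp add: Phi_def algebra_simps)
    also have "\<dots> = w * infsum (\<lambda>k. g x k - g y k) {n..}"
    proof -
      have s1: "g x summable_on {n..}" unfolding x_def by (rule g_it_summable)
      have s2: "g y summable_on {n..}" unfolding y_def by (rule g_it_summable)
      show ?thesis using infsum_diff_c[OF s1 s2] by simp
    qed
    finally have "norm (snd (it (Suc (Suc j))) n - snd (it (Suc j)) n) = norm w * norm (infsum (\<lambda>k. g x k - g y k) {n..})"
      by (simp add: norm_mult)
    also have "\<dots> \<le> norm w * ((((1 / 2^j) + (Mt / 2^j)) / \<delta>) * e n)"
      unfolding e_def by (intro mult_left_mono normC[OF ksub] g_diff_bound dt du) auto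
    also have "\<dots> \<le> norm w * ((((1 / 2^j) + (Mt / 2^j)) / \<delta>) * E)"
      by (intro mult_left_mono e_le_E) (use dpos Mt_nonneg in auto)
    also have "\<dots> = (norm w * E * (1 + Mt) / \<delta>) / 2^j" by (simp add: field_simps)
    also have "\<dots> \<le> (1/2) / 2^j"
    proof -
      have "2 * norm w * E * (1 + Mt) \<le> \<delta>" using sm3 unfolding Mt_def .
      then have "norm w * E * (1 + Mt) / \<delta> \<le> 1/2" using dpos by (simp add: field_simps)
      then show ?thesis by (rule divide_right_mono) simp
    qed
    also have "\<dots> = 1 / 2^(Suc j)" by simp
    finally show ?thesis .
  qed
  show ?case using f s by simp
qed

definition "tL n = lim (\<lambda>j. fst (it j) n)"
definition "uL n = lim (\<lambda>j. snd (it j) n)"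

lemma tL_conv: "(\<lambda>j. fst (it j) n) \<longlonglongrightarrow> tL n" "norm (fst (it j) n - tL n) \<le> 2 * Mt / 2^j"
  unfolding tL_def using geom_conv[of "\<lambda>j. fst (it j) n" Mt] inv2 by auto

lemma uL_conv: "(\<lambda>j. snd (it j) n) \<longlonglongrightarrow> uL n" "norm (snd (it j) n - uL n) \<le> 2 * 1 / 2^j"
  unfolding uL_def using geom_conv[of "\<lambda>j. snd (it j) n" 1] inv2 by auto

lemma tL_bound: "norm (tL n) \<le> Ct * e n"
  by (rule LIMSEQ_le_const2[OF tendsto_norm[OF tL_conv(1)]]) (use inv1 in auto)

lemma uL_bound: "norm (uL n - 1) \<le> Cu * norm w * e n"
  by (rule LIMSEQ_le_const2[OF tendsto_norm[OF tendsto_diff[OF uL_conv(1) tendsto_const]]]) (use inv1 in auto)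

lemma tL_fix: "tL n = (w * tL (n+1) + a n * uL (n+1)) / lam n"
proof -
  have "(\<lambda>j. fst (it (Suc j)) n) \<longlonglongrightarrow> tL n" using tL_conv(1) by (rule LIMSEQ_Suc)
  moreover have "(\<lambda>j. fst (it (Suc j)) n) \<longlonglongrightarrow> (w * tL (n+1) + a n * uL (n+1)) / lam n"
    unfolding it.simps Phi_def fst_conv
    by (intro tendsto_intros tL_conv uL_conv lam_nz)
  ultimately show ?thesis using LIMSEQ_unique by blast
qed


lemma tL_tb: "norm (tL m) \<le> Ct * E"
  using tL_bound[of m] mult_left_mono[OF e_le_E[of m] Ct_nonneg] by linarith

lemma uL_ub: "norm (uL m) \<le> 1 + Cu * norm w * E"
proof -
  have "norm (uL m) \<le> 1 + norm (uL m - 1)"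
    by (metis add.commute diff_add_cancel norm_one norm_triangle_ineq)
  also have "\<dots> \<le> 1 + Cu * norm w * e m" using uL_bound[of m] by simp
  also have "\<dots> \<le> 1 + Cu * norm w * E"
    using mult_left_mono[OF e_le_E, of "Cu * norm w" m] Cu_nonneg by simp
  finally show ?thesis .
qed

abbreviation "xL \<equiv> (tL, uL)"

lemma gL_summable: "g xL summable_on A"
  by (rule g_summable) (use tL_tb uL_ub in auto)

lemma uL_fix: "uL n = 1 + w * infsum (g xL) {n..}"
proof -
  have conv: "(\<lambda>j. infsum (g (it j)) {n..}) \<longlonglongrightarrow> infsum (g xL) {n..}"
  proof (rule geom_tendsto)
    fix j
    have "infsum (g (it j)) {n..} - infsum (g xL) {n..} = infsum (\<lambda>k. g (it j) k - g xL k) {n..}"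
      by (rule infsum_diff_c[symmetric]) (rule g_it_summable, rule gL_summable)
    then have "norm (infsum (g (it j)) {n..} - infsum (g xL) {n..})
       = norm (infsum (\<lambda>k. g (it j) k - g xL k) {n..})" by simp
    also have "\<dots> \<le> (((2 * 1 / 2^j) + (2 * Mt / 2^j)) / \<delta>) * e n"
      unfolding e_def by (intro normC[OF ksub] g_diff_bound) (use tL_conv(2) uL_conv(2) in auto)
    also have "\<dots> \<le> (((2 * 1 / 2^j) + (2 * Mt / 2^j)) / \<delta>) * E"
      by (intro mult_left_mono e_le_E) (use dpos Mt_nonneg in auto)
    also have "\<dots> = ((2 + 2 * Mt) / \<delta> * E) / 2^j" by (simp add: field_simps)
    finally show "norm (infsum (g (it j)) {n..} - infsum (g xL) {n..}) \<le> ((2 + 2 * Mt) / \<delta> * E) / 2^j" .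
  qed
  have "(\<lambda>j. snd (it (Suc j)) n) \<longlonglongrightarrow> uL n" using uL_conv(1) by (rule LIMSEQ_Suc)
  moreover have "(\<lambda>j. snd (it (Suc j)) n) \<longlonglongrightarrow> 1 + w * infsum (g xL) {n..}"
    unfolding it.simps Phi_def snd_conv
    by (rule tendsto_add[OF tendsto_const tendsto_mult[OF tendsto_const conv]])
  ultimately show ?thesis by (rule LIMSEQ_unique)
qed

lemma uL_rec: "uL n = uL (n+1) + w * g xL n"
proof -
  have "infsum (g xL) {n..} = g xL n + infsum (g xL) {n+1..}"
    by (rule infsum_split_int) (rule gL_summable)
  then have "uL n = 1 + w * (g xL n + infsum (g xL) {n+1..})" using uL_fix[of n] by simp
  moreover have "uL (n+1) = 1 + w * infsum (g xL) {n+1..}" by (rule uL_fix)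
  ultimately show ?thesis by (simp add: algebra_simps)
qed

lemma e_top: "(e \<longlongrightarrow> 0) at_top"
  unfolding e_def[abs_def] by (rule tail_top[OF ksum kpos])

lemma tL_top: "(tL \<longlongrightarrow> 0) at_top"
proof -
  have "((\<lambda>n. Ct * e n) \<longlongrightarrow> Ct * 0) at_top" by (intro tendsto_intros e_top)
  then have "((\<lambda>n. Ct * e n) \<longlongrightarrow> 0) at_top" by simp
  then show ?thesis
    by (rule Lim_null_comparison[rotated]) (use tL_bound in auto)
qed

lemma uL_top: "(uL \<longlongrightarrow> 1) at_top"
proof -
  have "((\<lambda>n. Cu * norm w * e n) \<longlongrightarrow> Cu * norm w * 0) at_top" by (intro tendsto_intros e_top)
  then have "((\<lambda>n. Cu * norm w * e n) \<longlongrightarrow> 0) at_top" by simp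
  then have "((\<lambda>n. uL n - 1) \<longlongrightarrow> 0) at_top"
    by (rule Lim_null_comparison[rotated]) (use uL_bound in auto)
  then show ?thesis by (simp add: LIM_zero_iff)
qed

lemma uL_bot: "(uL \<longlongrightarrow> 1 + w * infsum (g xL) UNIV) at_bot"
proof -
  have "((\<lambda>n. 1 + w * infsum (g xL) {n..}) \<longlongrightarrow> 1 + w * infsum (g xL) UNIV) at_bot"
    by (rule tendsto_add[OF tendsto_const tendsto_mult[OF tendsto_const tail_bot[OF gL_summable]]])
  moreover have "uL = (\<lambda>n. 1 + w * infsum (g xL) {n..})" by (rule ext) (rule uL_fix)
  ultimately show ?thesis by simp
qed

definition "Zc = (Ct*E + E*(Cu*E) + E)/\<delta>"
definition "Kx = (Cu*E + 1 + Ct*E + Zc)/\<delta> * E"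

lemma Zc_nonneg: "0 \<le> Zc" unfolding Zc_def using Ct_nonneg Cu_nonneg E_nonneg dpos by simp

lemma expansion:
  fixes a0 b0 c0 :: "int \<Rightarrow> complex"
  assumes a0: "\<And>n. norm (a n - a0 n) \<le> norm w * \<kappa> n"
      and b0: "\<And>n. norm (b n - b0 n) \<le> norm w * \<kappa> n"
      and c0: "\<And>n. norm (c n - c0 n) \<le> norm w * \<kappa> n"
      and b0b: "\<And>n. norm (b0 n) \<le> \<kappa> n"
  shows "norm (w * infsum (g xL) UNIV - w * infsum (\<lambda>k. (c0 k + b0 k * (a0 (k+1) / lam (k+1))) / lam k) UNIV)
           \<le> Kx * norm w ^ 2"
proof -
  define X where "X k = (c0 k + b0 k * (a0 (k+1) / lam (k+1))) / lam k" for k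
  have tdiff: "norm (tL m - a0 m / lam m) \<le> norm w * Zc" for m
  proof -
    have eq: "tL m - a0 m / lam m = (w * tL (m+1) + a m * (uL (m+1) - 1) + (a m - a0 m)) / lam m"
      using alg1[OF lam_nz[of m] tL_fix[of m]] .
    have "norm (w * tL (m+1) + a m * (uL (m+1) - 1) + (a m - a0 m))
        \<le> norm w * norm (tL (m+1)) + norm (a m) * norm (uL (m+1) - 1) + norm (a m - a0 m)"
      using tri3[of "w * tL (m+1)" "a m * (uL (m+1) - 1)" "a m - a0 m"] by (simp add: norm_mult)
    also have "\<dots> \<le> norm w * (Ct * E) + E * (Cu * norm w * E) + norm w * E"
    proof (intro add_mono mult_mono)
      show "norm (uL (m + 1) - 1) \<le> Cu * norm w * E"
        using uL_bound[of "m+1"] mult_left_mono[OF e_le_E[of "m+1"], of "Cu * norm w"] Cu_nonneg by simp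
      show "norm (a m - a0 m) \<le> norm w * E"
        using a0[of m] mult_left_mono[OF k_le_E[of m], of "norm w"] by simp
    qed (use tL_tb abnd[of m] k_le_E[of m] E_nonneg in auto)
    also have "\<dots> = norm w * (Ct*E + E*(Cu*E) + E)" by (simp add: algebra_simps)
    finally have "norm (tL m - a0 m / lam m) \<le> norm w * (Ct*E + E*(Cu*E) + E) / \<delta>"
      unfolding eq by (rule div_lam_bound)
    then show ?thesis unfolding Zc_def by simp
  qed
  have gX: "norm (g xL k - X k) \<le> (norm w * ((Cu*E + 1 + Ct*E + Zc)/\<delta>)) * \<kappa> k" for k
  proof -
    have eq: "g xL k - X k = (c k * (uL (k+1) - 1) + (c k - c0 k) + (b k - b0 k) * tL (k+1)
                 + b0 k * (tL (k+1) - a0 (k+1) / lam (k+1))) / lam k"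
      unfolding g_def X_def prod.sel by (rule alg2[OF lam_nz[of k]])
    have "norm (c k * (uL (k+1) - 1) + (c k - c0 k) + (b k - b0 k) * tL (k+1)
                 + b0 k * (tL (k+1) - a0 (k+1) / lam (k+1)))
        \<le> norm (c k) * norm (uL (k+1) - 1) + norm (c k - c0 k) + norm (b k - b0 k) * norm (tL (k+1))
           + norm (b0 k) * norm (tL (k+1) - a0 (k+1) / lam (k+1))"
      using tri4[of "c k * (uL (k+1) - 1)" "c k - c0 k" "(b k - b0 k) * tL (k+1)" "b0 k * (tL (k+1) - a0 (k+1) / lam (k+1))"]
      by (simp add: norm_mult)
    also have "\<dots> \<le> \<kappa> k * (Cu * norm w * E) + norm w * \<kappa> k + norm w * \<kappa> k * (Ct * E)
           + \<kappa> k * (norm w * Zc)"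
    proof (intro add_mono mult_mono)
      show "norm (uL (k + 1) - 1) \<le> Cu * norm w * E"
        using uL_bound[of "k+1"] mult_left_mono[OF e_le_E[of "k+1"], of "Cu * norm w"] Cu_nonneg by simp
    qed (use cbnd[of k] c0[of k] b0[of k] tL_tb b0b[of k] tdiff kpos[of k] in auto)
    also have "\<dots> = norm w * (Cu*E + 1 + Ct*E + Zc) * \<kappa> k" by (simp add: algebra_simps)
    finally have "norm (g xL k - X k) \<le> norm w * (Cu*E + 1 + Ct*E + Zc) * \<kappa> k / \<delta>"
      unfolding eq by (rule div_lam_bound)
    then show ?thesis by (simp add: field_simps)
  qed
  have dS: "(\<lambda>k. g xL k - X k) summable_on UNIV"
    by (rule sumC[OF ksum]) (rule gX)
  have gS: "g xL summable_on UNIV" by (rule gL_summable)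
  have Xs: "X summable_on UNIV"
  proof -
    have "(\<lambda>k. g xL k - (g xL k - X k)) summable_on UNIV"
      using summable_on_add[OF gS summable_on_uminus[THEN iffD2, OF dS]] by simp
    then show ?thesis by simp
  qed
  have "w * infsum (g xL) UNIV - w * infsum X UNIV = w * infsum (\<lambda>k. g xL k - X k) UNIV"
    unfolding infsum_diff_c[OF gS Xs] by (simp add: right_diff_distrib)
  then have "norm (w * infsum (g xL) UNIV - w * infsum X UNIV) = norm w * norm (infsum (\<lambda>k. g xL k - X k) UNIV)"
    by (simp add: norm_mult)
  also have "\<dots> \<le> norm w * ((norm w * ((Cu*E + 1 + Ct*E + Zc)/\<delta>)) * infsum \<kappa> UNIV)"
    by (intro mult_left_mono normC[OF ksum] gX) auto
  also have "\<dots> = Kx * norm w ^ 2" unfolding E_def[symmetric] Kx_def by (simp add: power2_eq_square field_simps)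
  finally show ?thesis unfolding X_def by simp
qed

end


lemma nat_uminus_at_bot: "filterlim (\<lambda>n::int. nat (-n)) sequentially at_bot"
  unfolding filterlim_at_top eventually_at_bot_linorder
proof (intro allI)
  fix Z :: nat
  show "\<exists>N. \<forall>n\<le>N. Z \<le> nat (- n)" by (rule exI[of _ "- int Z"]) auto
qed

lemma tendsto_at_bot_int:
  assumes "h \<longlonglongrightarrow> L" "eventually (\<lambda>n. f n = h (nat (-n))) at_bot"
  shows "(f \<longlongrightarrow> L) at_bot"
proof -
  have "((\<lambda>n. h (nat (-n))) \<longlongrightarrow> L) at_bot"
    by (rule filterlim_compose[OF assms(1) nat_uminus_at_bot])
  then show ?thesis using assms(2) tendsto_cong by (metis (mono_tags, lifting) eventually_mono)
qed

lemma tendsto_at_top_int: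
  assumes "h \<longlonglongrightarrow> L" "eventually (\<lambda>n. f n = h (nat n)) at_top"
  shows "(f \<longlongrightarrow> L) at_top"
proof -
  have "((\<lambda>n. h (nat n)) \<longlongrightarrow> L) at_top"
    by (rule filterlim_compose[OF assms(1) filterlim_nat_sequentially])
  then show ?thesis using assms(2) tendsto_cong by (metis (mono_tags, lifting) eventually_mono)
qed

lemma summable_int_parts:
  fixes f :: "int \<Rightarrow> real"
  assumes "f summable_on UNIV"
  shows "summable (\<lambda>i. f (int i))" "summable (\<lambda>i. f (- int i - 1))"
proof -
  have "f summable_on (range int)" using summable_on_subset_banach[OF assms] by blast
  then have "(f \<circ> int) summable_on UNIV" by (subst summable_on_reindex[symmetric]) auto
  then show "summable (\<lambda>i. f (int i))" using summable_on_imp_summable by (simp add: o_def)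
  have inj: "inj (\<lambda>i::nat. - int i - 1)" by (auto simp: inj_def)
  have "f summable_on (range (\<lambda>i::nat. - int i - 1))" using summable_on_subset_banach[OF assms] by blast
  then have "(f \<circ> (\<lambda>i::nat. - int i - 1)) summable_on UNIV"
    by (subst summable_on_reindex[symmetric]) (use inj in auto)
  then show "summable (\<lambda>i. f (- int i - 1))" using summable_on_imp_summable by (simp add: o_def)
qed

lemma int_prod_sym:
  "(\<Prod>j\<in>{- int N..int N}. lam j) = (\<Prod>i<N. lam (- int i - 1)) * (\<Prod>i<Suc N. lam (int i))"
proof (induction N)
  case 0
  then show ?case by simp
next
  case (Suc N)
  have s: "{- int (Suc N)..int (Suc N)} = insert (- int (Suc N)) (insert (int (Suc N)) {- int N..int N})"
    by auto
  have "(\<Prod>j\<in>{- int (Suc N)..int (Suc N)}. lam j)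
      = lam (- int (Suc N)) * (lam (int (Suc N)) * (\<Prod>j\<in>{- int N..int N}. lam j))"
    unfolding s by (subst prod.insert; simp)+
  also have "\<dots> = (\<Prod>i<Suc N. lam (- int i - 1)) * (\<Prod>i<Suc (Suc N). lam (int i))"
  proof -
    have h: "lam (- int (Suc N)) = lam (- int N - 1)" by (rule arg_cong[where f = lam]) simp
    show ?thesis unfolding Suc.IH h by (simp add: ac_simps)
  qed
  finally show ?case .
qed

lemma prod_tails:
  fixes lam :: "int \<Rightarrow> complex"
  assumes nz: "\<And>n. lam n \<noteq> 0" and sm: "(\<lambda>n. norm (lam n - 1)) summable_on UNIV"
  shows "\<exists>P. (\<forall>n. P n = lam n * P (n+1)) \<and> (P \<longlongrightarrow> 1) at_top \<and> (P \<longlongrightarrow> int_prod lam) at_bot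
             \<and> int_prod lam \<noteq> 0"
proof -
  define fp where "fp i = lam (int i)" for i
  define fm where "fm i = lam (- int i - 1)" for i
  have cp: "convergent_prod fp"
    by (rule abs_convergent_prod_imp_convergent_prod, rule summable_imp_abs_convergent_prod)
       (use summable_int_parts(1)[OF sm] in \<open>simp add: fp_def\<close>)
  have cm: "convergent_prod fm"
    by (rule abs_convergent_prod_imp_convergent_prod, rule summable_imp_abs_convergent_prod)
       (use summable_int_parts(2)[OF sm] in \<open>simp add: fm_def\<close>)
  define A where "A = prodinf fp"
  define B where "B = prodinf fm"
  have A0: "A \<noteq> 0" unfolding A_def by (rule prodinf_nonzero[OF cp]) (simp add: fp_def nz)
  have B0: "B \<noteq> 0" unfolding B_def by (rule prodinf_nonzero[OF cm]) (simp add: fm_def nz)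
  have lp: "(\<lambda>m. \<Prod>i<m. fp i) \<longlonglongrightarrow> A"
    unfolding A_def LIMSEQ_lessThan_iff_atMost by (rule convergent_prod_LIMSEQ[OF cp])
  have lm: "(\<lambda>m. \<Prod>i<m. fm i) \<longlonglongrightarrow> B"
    unfolding B_def LIMSEQ_lessThan_iff_atMost by (rule convergent_prod_LIMSEQ[OF cm])
  have pnz: "(\<Prod>i<m. fp i) \<noteq> 0" for m by (simp add: fp_def nz)
  define P where "P n = (if 0 \<le> n then A / (\<Prod>i<nat n. fp i) else (\<Prod>i<nat (-n). fm i) * A)" for n
  have rec: "P n = lam n * P (n+1)" for n
  proof (cases "0 \<le> n")
    case True
    have sn: "nat (n+1) = Suc (nat n)" using True by simp
    have fpn: "fp (nat n) = lam n" using True by (simp add: fp_def)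
    have e: "(\<Prod>i<nat (n+1). fp i) = (\<Prod>i<nat n. fp i) * lam n"
      unfolding sn prod.lessThan_Suc fpn ..
    have Pn: "P n = A / (\<Prod>i<nat n. fp i)" using True by (simp add: P_def)
    have Pn1: "P (n+1) = A / ((\<Prod>i<nat n. fp i) * lam n)"
      using True e by (simp add: P_def)
    show ?thesis unfolding Pn Pn1 using nz[of n] pnz[of "nat n"] by (simp add: field_simps)
  next
    case False
    show ?thesis
    proof (cases "n = -1")
      case True
      then show ?thesis by (simp add: P_def fm_def)
    next
      case F2: False
      have "nat (-n) = Suc (nat (-n-1))" using False F2 by simp
      moreover have "fm (nat (-n-1)) = lam n" using False F2 by (simp add: fm_def)
      ultimately have "(\<Prod>i<nat (-n). fm i) = (\<Prod>i<nat (-n-1). fm i) * lam n" by simp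
      moreover have "nat (-(n+1)) = nat (-n-1)" by simp
      ultimately show ?thesis using False F2 by (simp add: P_def algebra_simps)
    qed
  qed
  have top: "(P \<longlongrightarrow> 1) at_top"
  proof (rule tendsto_at_top_int)
    show "(\<lambda>m. A / (\<Prod>i<m. fp i)) \<longlonglongrightarrow> 1"
      using tendsto_divide[OF tendsto_const lp A0, of A] A0 by simp
    show "eventually (\<lambda>n. P n = A / (\<Prod>i<nat n. fp i)) at_top"
      using eventually_ge_at_top[of "0::int"] by eventually_elim (simp add: P_def)
  qed
  have ip: "(\<lambda>N. \<Prod>j\<in>{- int N..int N}. lam j) \<longlonglongrightarrow> B * A"
  proof -
    have "(\<lambda>N. (\<Prod>i<N. fm i) * (\<Prod>i<Suc N. fp i)) \<longlonglongrightarrow> B * A"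
      by (rule tendsto_mult[OF lm LIMSEQ_Suc[OF lp]])
    then show ?thesis unfolding int_prod_sym fm_def fp_def .
  qed
  then have IP: "int_prod lam = B * A" unfolding int_prod_def by (rule limI)
  have bot: "(P \<longlongrightarrow> int_prod lam) at_bot"
  proof (rule tendsto_at_bot_int)
    show "(\<lambda>m. (\<Prod>i<m. fm i) * A) \<longlonglongrightarrow> int_prod lam"
      unfolding IP by (rule tendsto_mult[OF lm tendsto_const])
    show "eventually (\<lambda>n. P n = (\<Prod>i<nat (-n). fm i) * A) at_bot"
      using eventually_le_at_bot[of "-1::int"] by eventually_elim (simp add: P_def)
  qed
  have "int_prod lam \<noteq> 0" using IP A0 B0 by simp
  then show ?thesis using rec top bot by blast
qed


lemma det_step:
  fixes z qq rr a1 a2 b1 b2 :: complex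
  assumes "z \<noteq> 0"
  shows "(z*a1 + (z - inverse z)*qq*a2) * (z*rr*b1 + (inverse z + (z - inverse z)*qq*rr)*b2)
       - (z*rr*a1 + (inverse z + (z - inverse z)*qq*rr)*a2) * (z*b1 + (z - inverse z)*qq*b2)
       = a1*b2 - a2*b1"
  using assms by (simp add: field_simps)

lemma wronski_zero:
  fixes q r :: "int \<Rightarrow> complex" and z :: complex and s :: "int \<Rightarrow> complex"
  assumes z: "z \<noteq> 0" and x: "AL_sol q r z x" and y: "AL_sol q r z y"
   and sbig: "eventually (\<lambda>n. 1 \<le> norm (s n)) at_top"
   and x1: "((\<lambda>n. s n * fst x n) \<longlongrightarrow> A1) at_top" and x2: "((\<lambda>n. s n * snd x n) \<longlongrightarrow> A2) at_top"
   and y1: "((\<lambda>n. s n * fst y n) \<longlongrightarrow> A1) at_top" and y2: "((\<lambda>n. s n * snd y n) \<longlongrightarrow> A2) at_top"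
  shows "fst x n * snd y n = snd x n * fst y n"
proof -
  define W where "W n = fst x n * snd y n - snd x n * fst y n" for n
  have step: "W n = W (n+1)" for n
    using x y det_step[OF z, of "fst x (n+1)" "q n" "snd x (n+1)" "r n" "fst y (n+1)" "snd y (n+1)"]
    unfolding AL_sol_def W_def by (metis (no_types, lifting))
  have const: "W n = W 0" for n
  proof (induction n rule: int_induct[where k = 0])
    case base then show ?case ..
  next
    case (step1 i) then show ?case using step[of i] by simp
  next
    case (step2 i) then show ?case using step[of "i-1"] by simp
  qed
  have lim: "((\<lambda>n. (s n * fst x n) * (s n * snd y n) - (s n * snd x n) * (s n * fst y n)) \<longlongrightarrow> A1 * A2 - A2 * A1) at_top"
    by (intro tendsto_intros x1 x2 y1 y2)
  have "(\<lambda>n. (s n * fst x n) * (s n * snd y n) - (s n * snd x n) * (s n * fst y n)) = (\<lambda>n. s n ^ 2 * W 0)"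
  proof (rule ext)
    fix n
    have "s n ^ 2 * W 0 = s n ^ 2 * W n" using const[of n] by simp
    then show "(s n * fst x n) * (s n * snd y n) - (s n * snd x n) * (s n * fst y n) = s n ^ 2 * W 0"
      unfolding W_def by (simp add: power2_eq_square algebra_simps)
  qed
  with lim have lim0: "((\<lambda>n. s n ^ 2 * W 0) \<longlongrightarrow> 0) at_top" by simp
  have W0: "W 0 = 0"
  proof (rule ccontr)
    assume ne: "W 0 \<noteq> 0"
    have "eventually (\<lambda>n. norm (s n ^ 2 * W 0) < norm (W 0)) at_top"
      using order_tendstoD(2)[OF tendsto_norm[OF lim0], of "norm (W 0)"] ne by simp
    moreover have "eventually (\<lambda>n. norm (W 0) \<le> norm (s n ^ 2 * W 0)) at_top"
      using sbig
    proof eventually_elim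
      case (elim n)
      have "1 \<le> norm (s n) ^ 2" using elim by (simp add: one_le_power)
      then have "1 * norm (W 0) \<le> norm (s n) ^ 2 * norm (W 0)" by (rule mult_right_mono) simp
      then show ?case by (simp add: norm_mult norm_power)
    qed
    ultimately have "eventually (\<lambda>n. norm (s n ^ 2 * W 0) < norm (W 0) \<and> norm (W 0) \<le> norm (s n ^ 2 * W 0)) at_top"
      by (rule eventually_conj)
    then have "eventually (\<lambda>n::int. False) at_top" by (rule eventually_mono) auto
    then show False by simp
  qed
  show ?thesis using const[of n] W0 unfolding W_def by simp
qed

lemma AL_unique_snd:
  fixes q r :: "int \<Rightarrow> complex" and z :: complex and s :: "int \<Rightarrow> complex"
  assumes z: "z \<noteq> 0" and x: "AL_sol q r z x" and y: "AL_sol q r z y"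
   and sbig: "eventually (\<lambda>n. 1 \<le> norm (s n)) at_top"
   and x1: "((\<lambda>n. s n * fst x n) \<longlongrightarrow> A1) at_top" and x2: "((\<lambda>n. s n * snd x n) \<longlongrightarrow> A2) at_top"
   and y1: "((\<lambda>n. s n * fst y n) \<longlongrightarrow> A1) at_top" and y2: "((\<lambda>n. s n * snd y n) \<longlongrightarrow> A2) at_top"
   and A2: "A2 \<noteq> 0"
  shows "x = y"
proof -
  have W: "fst x n * snd y n = snd x n * fst y n" for n
    by (rule wronski_zero[OF z x y sbig x1 x2 y1 y2])
  have "eventually (\<lambda>n. s n * snd x n \<noteq> 0) at_top"
    by (rule tendsto_imp_eventually_ne[OF x2 A2])
  then obtain N where N: "\<And>n. n \<ge> N \<Longrightarrow> s n * snd x n \<noteq> 0"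
    unfolding eventually_at_top_linorder by blast
  define c where "c n = snd y n / snd x n" for n
  have sx: "snd x n \<noteq> 0" "s n \<noteq> 0" if "n \<ge> N" for n using N[OF that] by auto
  have fy: "fst y n = c n * fst x n" if "n \<ge> N" for n
    using W[of n] sx[OF that] unfolding c_def by (simp add: field_simps)
  have sy: "snd y n = c n * snd x n" if "n \<ge> N" for n
    using sx[OF that] unfolding c_def by simp
  have cstep: "c n = c (n+1)" if "n \<ge> N" for n
  proof -
    have n1: "N \<le> n+1" using that by simp
    have xs: "snd x n = z * r n * fst x (n+1) + (inverse z + (z - inverse z) * q n * r n) * snd x (n+1)"
      using x unfolding AL_sol_def by blast
    have ys: "snd y n = z * r n * fst y (n+1) + (inverse z + (z - inverse z) * q n * r n) * snd y (n+1)"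
      using y unfolding AL_sol_def by blast
    have "snd y n = c (n+1) * (z * r n * fst x (n+1) + (inverse z + (z - inverse z) * q n * r n) * snd x (n+1))"
      using that unfolding ys fy[of "n+1", OF n1] sy[of "n+1", OF n1] by (simp add: algebra_simps)
    then have "snd y n = c (n+1) * snd x n" using xs by simp
    then show ?thesis using sx[OF that] unfolding c_def by simp
  qed
  have cN: "c n = c N" if "n \<ge> N" for n
    using that
  proof (induction n rule: int_ge_induct)
    case base then show ?case ..
  next
    case (step i) then show ?case using cstep[of i] by simp
  qed
  have lim3: "((\<lambda>n. (s n * snd y n) / (s n * snd x n)) \<longlongrightarrow> A2 / A2) at_top"
    by (rule tendsto_divide[OF y2 x2 A2])
  have ev3: "eventually (\<lambda>n. (s n * snd y n) / (s n * snd x n) = c N) at_top"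
    using eventually_ge_at_top[of N]
  proof eventually_elim
    case (elim n)
    have "(s n * snd y n) / (s n * snd x n) = snd y n / snd x n" using sx[OF elim] by simp
    also have "\<dots> = c N" using cN[OF elim] unfolding c_def by simp
    finally show ?case .
  qed
  have l2: "((\<lambda>n. (s n * snd y n) / (s n * snd x n)) \<longlongrightarrow> c N) at_top"
    using ev3 by (rule tendsto_eventually)
  have "A2 / A2 = c N" by (rule tendsto_unique[OF _ lim3 l2]) simp
  then have c1: "c N = 1" using A2 by simp
  have eqge: "fst y n = fst x n \<and> snd y n = snd x n" if "n \<ge> N" for n
    using fy[OF that] sy[OF that] cN[OF that] c1 by simp
  have eqle: "fst y n = fst x n \<and> snd y n = snd x n" if "n \<le> N" for n
    using that
  proof (induction n rule: int_le_induct)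
    case base then show ?case using eqge[of N] by simp
  next
    case (step i)
    then show ?case using x y unfolding AL_sol_def by (metis diff_add_cancel)
  qed
  have "fst y n = fst x n \<and> snd y n = snd x n" for n
    using eqge eqle by (cases "n \<ge> N") auto
  then show ?thesis by (simp add: prod_eq_iff fun_eq_iff)
qed

lemma AL_unique_fst:
  fixes q r :: "int \<Rightarrow> complex" and z :: complex and s :: "int \<Rightarrow> complex"
  assumes z: "z \<noteq> 0" and x: "AL_sol q r z x" and y: "AL_sol q r z y"
   and sbig: "eventually (\<lambda>n. 1 \<le> norm (s n)) at_top"
   and x1: "((\<lambda>n. s n * fst x n) \<longlongrightarrow> A1) at_top" and x2: "((\<lambda>n. s n * snd x n) \<longlongrightarrow> A2) at_top"
   and y1: "((\<lambda>n. s n * fst y n) \<longlongrightarrow> A1) at_top" and y2: "((\<lambda>n. s n * snd y n) \<longlongrightarrow> A2) at_top"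
   and A1: "A1 \<noteq> 0"
  shows "x = y"
proof -
  have W: "fst x n * snd y n = snd x n * fst y n" for n
    by (rule wronski_zero[OF z x y sbig x1 x2 y1 y2])
  have "eventually (\<lambda>n. s n * fst x n \<noteq> 0) at_top"
    by (rule tendsto_imp_eventually_ne[OF x1 A1])
  then obtain N where N: "\<And>n. n \<ge> N \<Longrightarrow> s n * fst x n \<noteq> 0"
    unfolding eventually_at_top_linorder by blast
  define c where "c n = fst y n / fst x n" for n
  have sx: "fst x n \<noteq> 0" "s n \<noteq> 0" if "n \<ge> N" for n using N[OF that] by auto
  have sy: "snd y n = c n * snd x n" if "n \<ge> N" for n
    using W[of n] sx[OF that] unfolding c_def by (simp add: field_simps)
  have fy: "fst y n = c n * fst x n" if "n \<ge> N" for n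
    using sx[OF that] unfolding c_def by simp
  have cstep: "c n = c (n+1)" if "n \<ge> N" for n
  proof -
    have n1: "N \<le> n+1" using that by simp
    have xs: "fst x n = z * fst x (n+1) + (z - inverse z) * q n * snd x (n+1)"
      using x unfolding AL_sol_def by blast
    have ys: "fst y n = z * fst y (n+1) + (z - inverse z) * q n * snd y (n+1)"
      using y unfolding AL_sol_def by blast
    have "fst y n = c (n+1) * (z * fst x (n+1) + (z - inverse z) * q n * snd x (n+1))"
      using that unfolding ys fy[of "n+1", OF n1] sy[of "n+1", OF n1] by (simp add: algebra_simps)
    then have "fst y n = c (n+1) * fst x n" using xs by simp
    then show ?thesis using sx[OF that] unfolding c_def by simp
  qed
  have cN: "c n = c N" if "n \<ge> N" for n
    using that
  proof (induction n rule: int_ge_induct)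
    case base then show ?case ..
  next
    case (step i) then show ?case using cstep[of i] by simp
  qed
  have lim3: "((\<lambda>n. (s n * fst y n) / (s n * fst x n)) \<longlongrightarrow> A1 / A1) at_top"
    by (rule tendsto_divide[OF y1 x1 A1])
  have ev3: "eventually (\<lambda>n. (s n * fst y n) / (s n * fst x n) = c N) at_top"
    using eventually_ge_at_top[of N]
  proof eventually_elim
    case (elim n)
    have "(s n * fst y n) / (s n * fst x n) = fst y n / fst x n" using sx[OF elim] by simp
    also have "\<dots> = c N" using cN[OF elim] unfolding c_def by simp
    finally show ?case .
  qed
  have l2: "((\<lambda>n. (s n * fst y n) / (s n * fst x n)) \<longlongrightarrow> c N) at_top"
    using ev3 by (rule tendsto_eventually)
  have "A1 / A1 = c N" by (rule tendsto_unique[OF _ lim3 l2]) simp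
  then have c1: "c N = 1" using A1 by simp
  have eqge: "fst y n = fst x n \<and> snd y n = snd x n" if "n \<ge> N" for n
    using fy[OF that] sy[OF that] cN[OF that] c1 by simp
  have eqle: "fst y n = fst x n \<and> snd y n = snd x n" if "n \<le> N" for n
    using that
  proof (induction n rule: int_le_induct)
    case base then show ?case using eqge[of N] by simp
  next
    case (step i)
    then show ?case using x y unfolding AL_sol_def by (metis diff_add_cancel)
  qed
  have "fst y n = fst x n \<and> snd y n = snd x n" for n
    using eqge eqle by (cases "n \<ge> N") auto
  then show ?thesis by (simp add: prod_eq_iff fun_eq_iff)
qed


lemma term_le_sum:
  fixes \<kappa> :: "int \<Rightarrow> real"
  assumes "\<kappa> summable_on UNIV" "\<And>k. \<kappa> k \<ge> 0"
  shows "\<kappa> n \<le> infsum \<kappa> UNIV"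
  using tail_nonneg_le[OF assms, of "{n}"] by simp

lemma shift_summable:
  fixes f :: "int \<Rightarrow> 'a::{topological_comm_monoid_add, t2_space}"
  shows "(\<lambda>n. f (n + c)) summable_on UNIV \<longleftrightarrow> f summable_on UNIV"
proof -
  have i: "inj (\<lambda>n::int. n + c)" by (auto simp: inj_def)
  have r: "range (\<lambda>n::int. n + c) = UNIV" by (auto intro: image_eqI[where x = "x - c" for x])
  show ?thesis using summable_on_reindex[OF i[unfolded inj_on_def[symmetric]], of f] r
    by (simp add: o_def)
qed

lemma shift_infsum:
  fixes f :: "int \<Rightarrow> 'a::{topological_comm_monoid_add, t2_space}"
  shows "infsum (\<lambda>n. f (n + c)) UNIV = infsum f UNIV"
proof -
  have i: "inj (\<lambda>n::int. n + c)" by (auto simp: inj_def)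
  have r: "range (\<lambda>n::int. n + c) = UNIV" by (auto intro: image_eqI[where x = "x - c" for x])
  show ?thesis using infsum_reindex[OF i, of f] r by (simp add: o_def)
qed

lemma neg_seq_at_bot: "filterlim (\<lambda>i::nat. - int i - 1) at_bot sequentially"
  unfolding filterlim_at_bot eventually_sequentially
proof (intro allI)
  fix Z :: int
  show "\<exists>N. \<forall>n\<ge>N. - int n - 1 \<le> Z" by (rule exI[of _ "nat (-Z)"]) auto
qed

lemma decay_summable:
  fixes f :: "int \<Rightarrow> complex"
  assumes top: "((\<lambda>n. of_int n ^ 2 * f n) \<longlongrightarrow> 0) at_top"
      and bot: "((\<lambda>n. of_int n ^ 2 * f n) \<longlongrightarrow> 0) at_bot"
  shows "(\<lambda>n. norm (f n)) summable_on UNIV"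
proof -
  have g: "summable (\<lambda>i::nat. inverse (real i ^ 2))" by (rule inverse_power_summable) simp
  have tp: "((\<lambda>i::nat. of_int (int i) ^ 2 * f (int i)) \<longlongrightarrow> 0) sequentially"
    by (rule filterlim_compose[OF top filterlim_int_sequentially])
  have ep: "eventually (\<lambda>i. norm (norm (f (int i))) \<le> inverse (real i ^ 2)) sequentially"
  proof -
    have "eventually (\<lambda>i. norm (of_int (int i) ^ 2 * f (int i)) < 1) sequentially"
      using order_tendstoD(2)[OF tendsto_norm[OF tp], of 1] by simp
    then show ?thesis using eventually_gt_at_top[of "0::nat"]
    proof eventually_elim
      case (elim i)
      then have "real i ^ 2 * norm (f (int i)) < 1" by (simp add: norm_mult norm_power)
      moreover have "real i ^ 2 > 0" using elim by simp
      ultimately show ?case by (simp add: field_simps)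
    qed
  qed
  have sp: "summable (\<lambda>i. norm (f (int i)))"
    by (rule summable_comparison_test_ev[OF ep g])
  have tm: "((\<lambda>i::nat. of_int (- int i - 1) ^ 2 * f (- int i - 1)) \<longlongrightarrow> 0) sequentially"
    by (rule filterlim_compose[OF bot neg_seq_at_bot])
  have em: "eventually (\<lambda>i. norm (norm (f (- int i - 1))) \<le> inverse (real i ^ 2)) sequentially"
  proof -
    have "eventually (\<lambda>i. norm (of_int (- int i - 1) ^ 2 * f (- int i - 1)) < 1) sequentially"
      using order_tendstoD(2)[OF tendsto_norm[OF tm], of 1] by simp
    then show ?thesis using eventually_gt_at_top[of "0::nat"]
    proof eventually_elim
      case (elim i)
      have "(of_int (- int i - 1) :: complex) = - of_nat (Suc i)" by simp
      then have e1: "norm (of_int (- int i - 1) :: complex) = real i + 1"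
        by (simp only: norm_minus_cancel norm_of_nat)
      have "norm (of_int (- int i - 1) ^ 2 :: complex) = (real i + 1) ^ 2"
        by (simp only: norm_power e1)
      then have "(real i + 1) ^ 2 * norm (f (- int i - 1)) < 1" using elim by (simp add: norm_mult)
      moreover have "real i ^ 2 * norm (f (- int i - 1)) \<le> (real i + 1) ^ 2 * norm (f (- int i - 1))"
        by (intro mult_right_mono power_mono) auto
      moreover have "real i ^ 2 > 0" using elim by simp
      ultimately show ?case by (simp add: field_simps)
    qed
  qed
  have sm: "summable (\<lambda>i. norm (f (- int i - 1)))"
    by (rule summable_comparison_test_ev[OF em g])
  have s1: "(\<lambda>n. norm (f n)) summable_on range int"
  proof -
    have "((\<lambda>n. norm (f n)) \<circ> int) summable_on UNIV"
      using sp summable_on_UNIV_nonneg_real_iff[of "(\<lambda>n. norm (f n)) \<circ> int"] by (simp add: o_def)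
    then show ?thesis by (subst summable_on_reindex) auto
  qed
  have inj: "inj (\<lambda>i::nat. - int i - 1)" by (auto simp: inj_def)
  have s2: "(\<lambda>n. norm (f n)) summable_on range (\<lambda>i::nat. - int i - 1)"
  proof -
    have "((\<lambda>n. norm (f n)) \<circ> (\<lambda>i::nat. - int i - 1)) summable_on UNIV"
      using sm summable_on_UNIV_nonneg_real_iff[of "(\<lambda>n. norm (f n)) \<circ> (\<lambda>i::nat. - int i - 1)"]
      by (simp add: o_def)
    then show ?thesis by (subst summable_on_reindex) (use inj in auto)
  qed
  have u: "UNIV = range int \<union> range (\<lambda>i::nat. - int i - 1)"
  proof -
    have "x \<in> range int \<union> range (\<lambda>i::nat. - int i - 1)" for x :: int
    proof (cases "x \<ge> 0")
      case True then show ?thesis by (auto intro: image_eqI[where x = "nat x"])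
    next
      case False then show ?thesis by (auto intro!: image_eqI[where x = "nat (- x - 1)"])
    qed
    then show ?thesis by auto
  qed
  have d: "range int \<inter> range (\<lambda>i::nat. - int i - 1) = {}" by auto
  show ?thesis by (subst u) (rule summable_on_Un_disjoint[OF s1 s2 d])
qed

lemma lower_bound:
  fixes lam :: "int \<Rightarrow> complex"
  assumes nz: "\<And>n. lam n \<noteq> 0" and t: "(lam \<longlongrightarrow> 1) at_top" and b: "(lam \<longlongrightarrow> 1) at_bot"
  shows "\<exists>\<delta>>0. \<forall>n. \<delta> \<le> norm (lam n)"
proof -
  have "eventually (\<lambda>n. 1/2 < norm (lam n)) at_top"
    using order_tendstoD(1)[OF tendsto_norm[OF t], of "1/2"] by simp
  then obtain N1 where N1: "\<And>n. n \<ge> N1 \<Longrightarrow> 1/2 < norm (lam n)"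
    unfolding eventually_at_top_linorder by blast
  have "eventually (\<lambda>n. 1/2 < norm (lam n)) at_bot"
    using order_tendstoD(1)[OF tendsto_norm[OF b], of "1/2"] by simp
  then obtain N2 where N2: "\<And>n. n \<le> N2 \<Longrightarrow> 1/2 < norm (lam n)"
    unfolding eventually_at_bot_linorder by blast
  define S where "S = insert (1/2) ((\<lambda>n. norm (lam n)) ` {N2..N1})"
  have fS: "finite S" unfolding S_def by simp
  have pos: "0 < Min S"
    using fS nz unfolding S_def by (subst Min_gr_iff) auto
  have "Min S \<le> norm (lam n)" for n
  proof (cases "n \<in> {N2..N1}")
    case True then show ?thesis using fS unfolding S_def by (intro Min_le) auto
  next
    case False
    then have "1/2 < norm (lam n)" using N1 N2 by (cases "n \<ge> N1") auto
    moreover have "Min S \<le> 1/2" using fS unfolding S_def by (intro Min_le) auto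
    ultimately show ?thesis by simp
  qed
  then show ?thesis using pos by blast
qed

lemma ev_small_at0:
  assumes "0 \<le> c" "0 < d"
  shows "eventually (\<lambda>z::complex. norm (z^2) * c \<le> d) (at 0)"
proof -
  have "((\<lambda>z::complex. norm (z^2) * c) \<longlongrightarrow> norm ((0::complex)^2) * c) (at 0)"
    by (intro tendsto_intros)
  then have "((\<lambda>z::complex. norm (z^2) * c) \<longlongrightarrow> 0) (at 0)" by simp
  from order_tendstoD(2)[OF this assms(2)] show ?thesis by eventually_elim simp
qed

lemma ev_small_atinf:
  assumes "0 \<le> c" "0 < d"
  shows "eventually (\<lambda>z::complex. norm (inverse (z^2)) * c \<le> d) at_infinity"
proof -
  have "((\<lambda>z::complex. norm (inverse z ^ 2) * c) \<longlongrightarrow> norm ((0::complex)^2) * c) at_infinity"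
    by (intro tendsto_intros tendsto_inverse_0)
  then have "((\<lambda>z::complex. norm (inverse (z^2)) * c) \<longlongrightarrow> 0) at_infinity" by (simp add: power_inverse)
  from order_tendstoD(2)[OF this assms(2)] show ?thesis by eventually_elim simp
qed

lemma final_bound:
  fixes w S \<rho> :: complex and K :: real
  assumes r: "norm \<rho> \<le> K * norm w ^ 2" and w1: "norm w \<le> 1" and wS: "norm w * norm S \<le> 1/4"
      and Kw: "K * norm w \<le> 1/4" and K0: "0 \<le> K"
  shows "norm (1 / (1 + w*S + \<rho>) - 1 + w * S) \<le> 2*(K + norm S^2 + norm S * K) * norm w ^ 2"
proof -
  define L where "L = 1 + w*S + \<rho>"
  have Kw2: "K * norm w ^ 2 \<le> 1/4"
  proof -
    have "K * norm w ^ 2 = (K * norm w) * norm w" by (simp add: power2_eq_square)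
    also have "\<dots> \<le> (1/4) * 1" by (intro mult_mono Kw w1) (use K0 in auto)
    finally show ?thesis by simp
  qed
  have "norm L \<ge> 1/2"
  proof -
    have "1 \<le> norm L + norm (w*S) + norm \<rho>"
      unfolding L_def by (smt (verit) norm_one norm_triangle_ineq4 norm_triangle_ineq norm_minus_cancel add_diff_cancel_right' diff_add_cancel)
    then show ?thesis using r Kw2 wS by (simp add: norm_mult)
  qed
  then have L0: "L \<noteq> 0" by auto
  have eq: "1 / L - 1 + w * S = (- \<rho> + w^2 * S^2 + w * S * \<rho>) / L"
    using L0 unfolding L_def by (simp add: field_simps power2_eq_square)
  have "norm (- \<rho> + w^2 * S^2 + w * S * \<rho>) \<le> norm \<rho> + norm w ^ 2 * norm S ^ 2 + norm w * norm S * norm \<rho>"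
    using tri3[of "- \<rho>" "w^2 * S^2" "w * S * \<rho>"] by (simp add: norm_mult norm_power)
  also have "\<dots> \<le> K * norm w ^ 2 + norm w ^ 2 * norm S ^ 2 + 1 * norm S * (K * norm w ^ 2)"
    by (intro add_mono mult_mono r w1 order_refl) auto
  also have "\<dots> = (K + norm S^2 + norm S * K) * norm w ^ 2" by (simp add: algebra_simps)
  finally have num: "norm (- \<rho> + w^2 * S^2 + w * S * \<rho>) \<le> (K + norm S^2 + norm S * K) * norm w ^ 2" .
  have "norm (1 / L - 1 + w * S) = norm (- \<rho> + w^2 * S^2 + w * S * \<rho>) / norm L"
    unfolding eq by (simp add: norm_divide)
  also have "\<dots> \<le> ((K + norm S^2 + norm S * K) * norm w ^ 2) / (1/2)"
    by (rule frac_le) (use num \<open>norm L \<ge> 1/2\<close> K0 in auto)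
  finally show ?thesis unfolding L_def by (simp add: algebra_simps)
qed


context picard
begin

lemma X_summable:
  fixes a0 b0 c0 :: "int \<Rightarrow> complex"
  assumes "\<And>n. norm (a0 n) \<le> \<kappa> n" "\<And>n. norm (b0 n) \<le> \<kappa> n" "\<And>n. norm (c0 n) \<le> \<kappa> n"
  shows "(\<lambda>k. (c0 k + b0 k * (a0 (k+1) / lam (k+1))) / lam k) summable_on UNIV"
proof (rule sumC[OF ksum, where C = "(1 + E/\<delta>)/\<delta>"])
  fix k :: int
  have "norm (a0 (k+1) / lam (k+1)) \<le> E / \<delta>"
    by (rule div_lam_bound) (use assms(1)[of "k+1"] k_le_E[of "k+1"] in simp)
  then have "norm (b0 k * (a0 (k+1) / lam (k+1))) \<le> \<kappa> k * (E / \<delta>)"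
    unfolding norm_mult by (intro mult_mono assms(2)) (use kpos in auto)
  then have "norm (c0 k + b0 k * (a0 (k+1) / lam (k+1))) \<le> \<kappa> k + \<kappa> k * (E / \<delta>)"
    using assms(3)[of k] norm_triangle_ineq[of "c0 k" "b0 k * (a0 (k+1) / lam (k+1))"] by simp
  then have "norm ((c0 k + b0 k * (a0 (k+1) / lam (k+1))) / lam k) \<le> (\<kappa> k + \<kappa> k * (E / \<delta>)) / \<delta>"
    by (rule div_lam_bound)
  then show "norm ((c0 k + b0 k * (a0 (k+1) / lam (k+1))) / lam k) \<le> (1 + E/\<delta>)/\<delta> * \<kappa> k"
    by (simp add: field_simps)
qed

end

lemma AL_from_F:
  fixes z w :: complex and q r A B :: "int \<Rightarrow> complex"
  assumes z: "z \<noteq> 0" and w: "w = z^2"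
   and hA: "\<And>n. A n = w * A (n+1) + (w - 1) * q n * B (n+1)"
   and hB: "\<And>n. B n = w * r n * A (n+1) + (1 + (w - 1) * q n * r n) * B (n+1)"
  shows "AL_sol q r z (\<lambda>n. z powi n * A n, \<lambda>n. z powi n * B n)"
  unfolding AL_sol_def fst_conv snd_conv
proof (intro allI conjI)
  fix n :: int
  have p: "z powi (n+1) = z powi n * z" using z by (simp add: power_int_add_1)
  show "z powi n * A n = z * (z powi (n + 1) * A (n + 1)) + (z - inverse z) * q n * (z powi (n + 1) * B (n + 1))"
    unfolding p hA[of n] w using z by (simp add: field_simps power2_eq_square)
  show "z powi n * B n = z * r n * (z powi (n + 1) * A (n + 1)) + (inverse z + (z - inverse z) * q n * r n) * (z powi (n + 1) * B (n + 1))"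
    unfolding p hB[of n] w using z by (simp add: field_simps power2_eq_square)
qed

lemma AL_from_G:
  fixes z v :: complex and q r A B :: "int \<Rightarrow> complex"
  assumes z: "z \<noteq> 0" and v: "v = inverse (z^2)"
   and hA: "\<And>n. A n = A (n+1) + (1 - v) * q n * B (n+1)"
   and hB: "\<And>n. B n = r n * A (n+1) + (v + (1 - v) * q n * r n) * B (n+1)"
  shows "AL_sol q r z (\<lambda>n. z powi (-n) * A n, \<lambda>n. z powi (-n) * B n)"
  unfolding AL_sol_def fst_conv snd_conv
proof (intro allI conjI)
  fix n :: int
  have p: "z powi (- (n+1)) = z powi (-n) * inverse z"
    using z power_int_add[of z "-n" "-1"] by (simp add: power_int_minus)
  show "z powi (-n) * A n = z * (z powi (- (n + 1)) * A (n + 1)) + (z - inverse z) * q n * (z powi (- (n + 1)) * B (n + 1))"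
    unfolding p hA[of n] v using z by (simp add: field_simps power2_eq_square)
  show "z powi (-n) * B n = z * r n * (z powi (- (n + 1)) * A (n + 1)) + (inverse z + (z - inverse z) * q n * r n) * (z powi (- (n + 1)) * B (n + 1))"
    unfolding p hB[of n] v using z by (simp add: field_simps power2_eq_square)
qed

lemma powi_cancel1: "(z::complex) \<noteq> 0 \<Longrightarrow> z powi (-n) * (z powi n * X) = X"
  by (simp add: power_int_minus)

lemma powi_cancel2: "(z::complex) \<noteq> 0 \<Longrightarrow> z powi n * (z powi (-n) * X) = X"
  by (simp add: power_int_minus)

lemma sbig_small:
  fixes z :: complex
  assumes "z \<noteq> 0" "norm z \<le> 1"
  shows "eventually (\<lambda>n. 1 \<le> norm (z powi (-n))) at_top"
  using eventually_ge_at_top[of "0::int"]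
proof eventually_elim
  case (elim n)
  then obtain m where m: "n = int m" using nonneg_int_cases by blast
  have "norm (z powi (-n)) = inverse (norm z ^ m)"
    unfolding m by (simp add: power_int_minus norm_inverse norm_power)
  moreover have "norm z ^ m \<le> 1" using assms by (simp add: power_le_one)
  moreover have "0 < norm z ^ m" using assms by simp
  ultimately show ?case by (simp add: one_le_inverse)
qed

lemma sbig_large:
  fixes z :: complex
  assumes "1 \<le> norm z"
  shows "eventually (\<lambda>n. 1 \<le> norm (z powi n)) at_top"
  using eventually_ge_at_top[of "0::int"]
proof eventually_elim
  case (elim n)
  then obtain m where m: "n = int m" using nonneg_int_cases by blast
  show ?case unfolding m using assms by (simp add: norm_power one_le_power)
qed


lemma ev_nz_at0: "eventually (\<lambda>z::complex. z \<noteq> 0) (at 0)"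
  by (simp add: eventually_at_filter)

lemma partF:
  fixes q r :: "int \<Rightarrow> complex" and \<kappa> :: "int \<Rightarrow> real"
  assumes kpos: "\<And>n. 0 \<le> \<kappa> n" and ksum: "\<kappa> summable_on UNIV"
   and kq: "\<And>n. 2 * norm (q n) \<le> \<kappa> n" and kr: "\<And>n. norm (r n) \<le> \<kappa> n"
   and kqr: "\<And>n. norm (q n * r n) \<le> \<kappa> n"
   and q0t: "(q \<longlongrightarrow> 0) at_top" and q0b: "(q \<longlongrightarrow> 0) at_bot"
   and r0t: "(r \<longlongrightarrow> 0) at_top" and r0b: "(r \<longlongrightarrow> 0) at_bot"
   and nz1: "\<And>n. 1 - q n * r n \<noteq> 0"
   and D_def: "D = int_prod (\<lambda>j. 1 - q j * r j)"
   and S_def: "S = (\<Sum>\<^sub>\<infinity>k::int. r k * (q k - q (k+1) - q k * q (k+1) * r (k+1))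
                 / ((1 - q k * r k) * (1 - q (k+1) * r (k+1))))"
  shows "\<exists>R. R \<in> O[at 0](\<lambda>z. z ^ 4) \<and>
           (\<forall>\<^sub>F z in at 0. transT q r z = (1 - z\<^sup>2 * S + R z) / D)"
proof -
  have lsum: "(\<lambda>n. norm ((1 - q n * r n) - 1)) summable_on UNIV"
    by (rule summable_on_comparison_test[OF ksum]) (use kqr in auto)
  obtain P where Prec: "\<And>n. P n = (1 - q n * r n) * P (n+1)" and Ptop: "(P \<longlongrightarrow> 1) at_top"
      and Pbot: "(P \<longlongrightarrow> D) at_bot" and D0: "D \<noteq> 0"
    using prod_tails[of "\<lambda>j. 1 - q j * r j", OF nz1 lsum] unfolding D_def by blast
  have lt: "((\<lambda>n. 1 - q n * r n) \<longlongrightarrow> 1) at_top"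
    using tendsto_diff[OF tendsto_const tendsto_mult[OF q0t r0t], of 1] by simp
  have lb: "((\<lambda>n. 1 - q n * r n) \<longlongrightarrow> 1) at_bot"
    using tendsto_diff[OF tendsto_const tendsto_mult[OF q0b r0b], of 1] by simp
  obtain \<delta> where dpos: "\<delta> > 0" and lamb: "\<And>n. \<delta> \<le> norm (1 - q n * r n)"
    using lower_bound[of "\<lambda>n. 1 - q n * r n", OF nz1 lt lb] by blast
  define E where "E = infsum \<kappa> UNIV"
  have E0: "0 \<le> E" unfolding E_def by (rule infsum_nonneg) (use kpos in auto)
  define K where "K = max 0 (picard.Kx \<delta> E)"
  have K0: "0 \<le> K" unfolding K_def by simp
  define c1 where "c1 = 2/\<delta> + (2*(1 + 2/\<delta>*E)/\<delta>) * E"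
  define c3 where "c3 = 2 * E * (1 + 4*E/\<delta>)"
  have c1p: "0 \<le> c1" unfolding c1_def using dpos E0 by simp
  have c3p: "0 \<le> c3" unfolding c3_def using dpos E0 by simp
  define CF where "CF = 2*(K + norm S^2 + norm S * K)"
  have ev: "eventually (\<lambda>z::complex. z \<noteq> 0 \<and> norm (z^2) * 1 \<le> 1 \<and> norm (z^2) * c1 \<le> 1 \<and> norm (z^2) * 4 \<le> \<delta>
       \<and> norm (z^2) * c3 \<le> \<delta> \<and> norm (z^2) * E \<le> \<delta> \<and> norm (z^2) * norm S \<le> 1/4 \<and> norm (z^2) * K \<le> 1/4) (at 0)"
  proof -
    have e2: "eventually (\<lambda>z::complex. norm (z^2) * 1 \<le> 1) (at 0)" by (rule ev_small_at0) auto
    have e3: "eventually (\<lambda>z::complex. norm (z^2) * c1 \<le> 1) (at 0)" by (rule ev_small_at0) (use c1p in auto)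
    have e4: "eventually (\<lambda>z::complex. norm (z^2) * 4 \<le> \<delta>) (at 0)" by (rule ev_small_at0) (use dpos in auto)
    have e5: "eventually (\<lambda>z::complex. norm (z^2) * c3 \<le> \<delta>) (at 0)" by (rule ev_small_at0) (use c3p dpos in auto)
    have e6: "eventually (\<lambda>z::complex. norm (z^2) * E \<le> \<delta>) (at 0)" by (rule ev_small_at0) (use E0 dpos in auto)
    have e7: "eventually (\<lambda>z::complex. norm (z^2) * norm S \<le> 1/4) (at 0)" by (rule ev_small_at0) auto
    have e8: "eventually (\<lambda>z::complex. norm (z^2) * K \<le> 1/4) (at 0)" by (rule ev_small_at0) (use K0 in auto)
    show ?thesis using ev_nz_at0 e2 e3 e4 e5 e6 e7 e8 by eventually_elim blast
  qed
  have main: "norm (D * transT q r z - 1 + z^2 * S) \<le> CF * norm (z^4)"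
    if z: "z \<noteq> 0" and h1: "norm (z^2) * 1 \<le> 1" and h2: "norm (z^2) * c1 \<le> 1" and h3: "norm (z^2) * 4 \<le> \<delta>"
       and h4: "norm (z^2) * c3 \<le> \<delta>" and h5: "norm (z^2) * E \<le> \<delta>" and h6: "norm (z^2) * norm S \<le> 1/4"
       and h7: "norm (z^2) * K \<le> 1/4" for z
  proof -
    define w where "w = z^2"
    have w1: "norm w \<le> 1" using h1 unfolding w_def by simp
    have wm1: "norm (w - 1) \<le> 2" using w1 norm_triangle_ineq4[of w 1] by simp
    interpret PI: picard w "\<lambda>n. 1 - q n * r n" "\<lambda>n. (w - 1) * q n" r "\<lambda>n. q n * r n" \<kappa> \<delta> E
    proof
      show "norm ((w - 1) * q n) \<le> \<kappa> n" for n
      proof -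
        have "norm ((w - 1) * q n) \<le> 2 * norm (q n)"
          unfolding norm_mult by (rule mult_right_mono[OF wm1]) simp
        then show ?thesis using kq[of n] by simp
      qed
      show "norm w * (2/\<delta> + (2*(1 + 2/\<delta>*E)/\<delta>) * E) \<le> 1" using h2 unfolding c1_def w_def .
      show "4 * norm w \<le> \<delta>" using h3 unfolding w_def by simp
      show "2 * norm w * E * (1 + 4*E/\<delta>) \<le> \<delta>" using h4 unfolding c3_def w_def by (simp add: algebra_simps)
      show "norm w * E \<le> \<delta>" using h5 unfolding w_def .
    qed (use kpos ksum E_def dpos lamb kr kqr in auto)
    define A where "A n = P n * PI.tL n" for n
    define B where "B n = P n * PI.uL n" for n
    have gL: "PI.g PI.xL n = (q n * r n * PI.uL (n+1) + r n * PI.tL (n+1)) / (1 - q n * r n)" for n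
      unfolding PI.g_def by simp
    have hA: "A n = w * A (n+1) + (w - 1) * q n * B (n+1)" for n
    proof -
      have "A n = (1 - q n * r n) * P (n+1) * ((w * PI.tL (n+1) + (w - 1) * q n * PI.uL (n+1)) / (1 - q n * r n))"
        unfolding A_def using Prec[of n] PI.tL_fix[of n] by simp
      also have "\<dots> = P (n+1) * (w * PI.tL (n+1) + (w - 1) * q n * PI.uL (n+1))"
        using nz1[of n] by (simp add: field_simps)
      also have "\<dots> = w * A (n+1) + (w - 1) * q n * B (n+1)" unfolding A_def B_def by (simp add: algebra_simps)
      finally show ?thesis .
    qed
    have hB: "B n = w * r n * A (n+1) + (1 + (w - 1) * q n * r n) * B (n+1)" for n
    proof -
      have "B n = (1 - q n * r n) * P (n+1) * (PI.uL (n+1) + w * ((q n * r n * PI.uL (n+1) + r n * PI.tL (n+1)) / (1 - q n * r n)))"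
        unfolding B_def using Prec[of n] PI.uL_rec[of n] gL[of n] by simp
      also have "\<dots> = P (n+1) * ((1 - q n * r n) * PI.uL (n+1) + w * (q n * r n * PI.uL (n+1) + r n * PI.tL (n+1)))"
        using nz1[of n] by (simp add: field_simps)
      also have "\<dots> = w * r n * A (n+1) + (1 + (w - 1) * q n * r n) * B (n+1)"
        unfolding A_def B_def by (simp add: algebra_simps)
      finally show ?thesis .
    qed
    define \<psi> where "\<psi> = (\<lambda>n. z powi n * A n, \<lambda>n. z powi n * B n)"
    have sol: "AL_sol q r z \<psi>" unfolding \<psi>_def by (rule AL_from_F[where A = A and B = B, OF z w_def hA hB])
    have At: "(A \<longlongrightarrow> 0) at_top"
      unfolding A_def using tendsto_mult[OF Ptop PI.tL_top] by simp
    have Bt: "(B \<longlongrightarrow> 1) at_top"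
      unfolding B_def using tendsto_mult[OF Ptop PI.uL_top] by simp
    have l1: "((\<lambda>n. z powi (-n) * fst \<psi> n) \<longlongrightarrow> 0) at_top"
      unfolding \<psi>_def fst_conv powi_cancel1[OF z] by (rule At)
    have l2: "((\<lambda>n. z powi (-n) * snd \<psi> n) \<longlongrightarrow> 1) at_top"
      unfolding \<psi>_def snd_conv powi_cancel1[OF z] by (rule Bt)
    have z1: "norm z \<le> 1"
    proof -
      have "norm z ^ 2 \<le> 1" using w1 unfolding w_def by (simp add: norm_power)
      then show ?thesis by (simp add: power_le_one_iff)
    qed
    have psi: "jost_psi q r z = \<psi>"
      unfolding jost_psi_def
    proof (rule the_equality)
      show "AL_sol q r z \<psi> \<and> ((\<lambda>n. z powi (-n) * fst \<psi> n) \<longlongrightarrow> 0) at_top \<and> ((\<lambda>n. z powi (-n) * snd \<psi> n) \<longlongrightarrow> 1) at_top"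
        using sol l1 l2 by blast
      fix ab assume ab: "AL_sol q r z ab \<and> ((\<lambda>n. z powi (-n) * fst ab n) \<longlongrightarrow> 0) at_top \<and> ((\<lambda>n. z powi (-n) * snd ab n) \<longlongrightarrow> 1) at_top"
      show "ab = \<psi>"
        using AL_unique_snd[OF z sol _ sbig_small[OF z z1] l1 l2, of ab] ab by simp
    qed
    define L where "L = 1 + w * infsum (PI.g PI.xL) UNIV"
    have Bb: "(B \<longlongrightarrow> D * L) at_bot"
      unfolding B_def L_def by (rule tendsto_mult[OF Pbot PI.uL_bot])
    have "Lim at_bot (\<lambda>n. z powi (-n) * snd (jost_psi q r z) n) = D * L"
      unfolding psi \<psi>_def snd_conv powi_cancel1[OF z] by (rule tendsto_Lim[OF _ Bb]) simp
    then have T: "transT q r z = 1 / (D * L)" unfolding transT_def by simp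
    have X: "(\<Sum>\<^sub>\<infinity>k. (q k * r k + r k * (- q (k+1) / (1 - q (k+1) * r (k+1)))) / (1 - q k * r k)) = S"
      unfolding S_def
    proof (rule infsum_cong)
      fix k :: int
      show "(q k * r k + r k * (- q (k+1) / (1 - q (k+1) * r (k+1)))) / (1 - q k * r k)
          = r k * (q k - q (k+1) - q k * q (k+1) * r (k+1)) / ((1 - q k * r k) * (1 - q (k+1) * r (k+1)))"
        using nz1[of k] nz1[of "k+1"] by (simp add: field_simps)
    qed
    have "norm (w * infsum (PI.g PI.xL) UNIV - w * (\<Sum>\<^sub>\<infinity>k. (q k * r k + r k * (- q (k+1) / (1 - q (k+1) * r (k+1)))) / (1 - q k * r k)))
           \<le> PI.Kx * norm w ^ 2"
    proof (rule PI.expansion)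
      show "norm ((w - 1) * q n - - q n) \<le> norm w * \<kappa> n" for n
      proof -
        have "norm ((w - 1) * q n - - q n) = norm w * norm (q n)" by (simp add: algebra_simps norm_mult)
        also have "\<dots> \<le> norm w * \<kappa> n"
        proof -
          have qk: "norm (q n) \<le> \<kappa> n" using kq[of n] norm_ge_zero[of "q n"] by linarith
          show ?thesis by (rule mult_left_mono[OF qk norm_ge_zero])
        qed
        finally show ?thesis .
      qed
    qed (use kr kpos in auto)
    then have rho: "norm (w * infsum (PI.g PI.xL) UNIV - w * S) \<le> K * norm w ^ 2"
      unfolding X K_def by (rule order_trans) (intro mult_right_mono, auto)
    define \<rho> where "\<rho> = w * infsum (PI.g PI.xL) UNIV - w * S"
    have Lr: "L = 1 + w * S + \<rho>" unfolding L_def \<rho>_def by simp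
    have fb: "norm (1 / (1 + w*S + \<rho>) - 1 + w * S) \<le> 2*(K + norm S^2 + norm S * K) * norm w ^ 2"
      by (rule final_bound) (use rho h6 h7 w1 K0 in \<open>auto simp: \<rho>_def w_def norm_mult mult_ac\<close>)
    have eqR: "D * transT q r z - 1 + z^2 * S = 1 / (1 + w*S + \<rho>) - 1 + w * S"
      unfolding T Lr[symmetric] w_def[symmetric] using D0 by simp
    have nw: "norm w ^ 2 = norm (z^4)" unfolding w_def by (simp add: norm_power)
    show ?thesis unfolding eqR CF_def nw[symmetric] by (rule fb)
  qed
  define R where "R z = D * transT q r z - 1 + z^2 * S" for z
  have "R \<in> O[at 0](\<lambda>z. z ^ 4)"
  proof (rule bigoI)
    show "eventually (\<lambda>z. norm (R z) \<le> CF * norm (z ^ 4)) (at 0)"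
      using ev by eventually_elim (use main in \<open>auto simp: R_def\<close>)
  qed
  moreover have "\<forall>\<^sub>F z in at 0. transT q r z = (1 - z\<^sup>2 * S + R z) / D"
    by (rule always_eventually) (use D0 in \<open>auto simp: R_def field_simps\<close>)
  ultimately show ?thesis by blast
qed


lemma algQ:
  fixes N l0 l1 q0 r1 r2 :: complex
  assumes "l0 \<noteq> 0" "l1 \<noteq> 0" "N = - (q0 * r1) * l1 + q0 * r2 - l1 + l0"
  shows "N / (l0 * l1) = (- (q0 * r1) + q0 * (r2 / l1)) / l0 - (1 / l0 - 1) + (1 / l1 - 1)"
proof -
  have "(- (q0 * r1) + q0 * (r2 / l1)) / l0 - (1 / l0 - 1) + (1 / l1 - 1)
      = (- (q0 * r1) * l1 + q0 * r2 - l1 + l0) / (l0 * l1)"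
    using assms(1,2) by (simp add: field_simps)
  then show ?thesis using assms(3) by simp
qed

lemma ev_nz_atinf: "eventually (\<lambda>z::complex. z \<noteq> 0) at_infinity"
  unfolding eventually_at_infinity by (rule exI[of _ 1]) auto

lemma succ_top: "filterlim (\<lambda>n::int. n + 1) at_top at_top"
  unfolding filterlim_at_top eventually_at_top_linorder
proof (intro allI)
  fix Z :: int show "\<exists>N. \<forall>n\<ge>N. Z \<le> n + 1" by (rule exI[of _ Z]) auto
qed

lemma succ_bot: "filterlim (\<lambda>n::int. n + 1) at_bot at_bot"
  unfolding filterlim_at_bot eventually_at_bot_linorder
proof (intro allI)
  fix Z :: int show "\<exists>N. \<forall>n\<le>N. n + 1 \<le> Z" by (rule exI[of _ "Z - 1"]) auto
qed

lemma partG: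
  fixes q r :: "int \<Rightarrow> complex" and \<kappa> :: "int \<Rightarrow> real"
  assumes kpos: "\<And>n. 0 \<le> \<kappa> n" and ksum: "\<kappa> summable_on UNIV"
   and kq: "\<And>n. 2 * norm (q n) \<le> \<kappa> n" and kr1: "\<And>n. norm (r (n+1)) \<le> \<kappa> n"
   and kqr1: "\<And>n. norm (q n * r (n+1)) \<le> \<kappa> n"
   and q0t: "(q \<longlongrightarrow> 0) at_top" and q0b: "(q \<longlongrightarrow> 0) at_bot"
   and r0t: "(r \<longlongrightarrow> 0) at_top" and r0b: "(r \<longlongrightarrow> 0) at_bot"
   and nz2: "\<And>n. 1 + q n * r (n+1) \<noteq> 0"
   and Ep_def: "Ep = int_prod (\<lambda>j. 1 + q j * r (j+1))"
   and Q_def: "Q = (\<Sum>\<^sub>\<infinity>k::int. r (k+2) * (q k - q (k+1) - q k * q (k+1) * r (k+1))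
                 / ((1 + q k * r (k+1)) * (1 + q (k+1) * r (k+2))))"
  shows "\<exists>R. R \<in> O[at_infinity](\<lambda>z. inverse (z ^ 4)) \<and>
           (\<forall>\<^sub>F z in at_infinity. transTbar q r z = (1 - inverse (z\<^sup>2) * Q + R z) / Ep)"
proof -
  have qk: "norm (q n) \<le> \<kappa> n" for n using kq[of n] norm_ge_zero[of "q n"] by linarith
  have lsum: "(\<lambda>n. norm ((1 + q n * r (n+1)) - 1)) summable_on UNIV"
    by (rule summable_on_comparison_test[OF ksum]) (use kqr1 in auto)
  obtain P where Prec: "\<And>n. P n = (1 + q n * r (n+1)) * P (n+1)" and Ptop: "(P \<longlongrightarrow> 1) at_top"
      and Pbot: "(P \<longlongrightarrow> Ep) at_bot" and E0': "Ep \<noteq> 0"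
    using prod_tails[of "\<lambda>j. 1 + q j * r (j+1)", OF nz2 lsum] unfolding Ep_def by blast
  have r1t: "((\<lambda>n. r (n+1)) \<longlongrightarrow> 0) at_top" by (rule filterlim_compose[OF r0t succ_top])
  have r1b: "((\<lambda>n. r (n+1)) \<longlongrightarrow> 0) at_bot" by (rule filterlim_compose[OF r0b succ_bot])
  have lt: "((\<lambda>n. 1 + q n * r (n+1)) \<longlongrightarrow> 1) at_top"
    using tendsto_add[OF tendsto_const tendsto_mult[OF q0t r1t], of 1] by simp
  have lb: "((\<lambda>n. 1 + q n * r (n+1)) \<longlongrightarrow> 1) at_bot"
    using tendsto_add[OF tendsto_const tendsto_mult[OF q0b r1b], of 1] by simp
  obtain \<delta> where dpos: "\<delta> > 0" and lamb: "\<And>n. \<delta> \<le> norm (1 + q n * r (n+1))"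
    using lower_bound[of "\<lambda>n. 1 + q n * r (n+1)", OF nz2 lt lb] by blast
  define Ek where "Ek = infsum \<kappa> UNIV"
  have E0: "0 \<le> Ek" unfolding Ek_def by (rule infsum_nonneg) (use kpos in auto)
  define K where "K = max 0 (picard.Kx \<delta> Ek)"
  have K0: "0 \<le> K" unfolding K_def by simp
  define c1 where "c1 = 2/\<delta> + (2*(1 + 2/\<delta>*Ek)/\<delta>) * Ek"
  define c3 where "c3 = 2 * Ek * (1 + 4*Ek/\<delta>)"
  have c1p: "0 \<le> c1" unfolding c1_def using dpos E0 by simp
  have c3p: "0 \<le> c3" unfolding c3_def using dpos E0 by simp
  define CF where "CF = 2*(K + norm Q^2 + norm Q * K)"
  define lam where "lam n = 1 + q n * r (n+1)" for n
  define hh where "hh k = 1 / lam k - 1" for k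
  have hhs: "hh summable_on UNIV"
  proof (rule sumC[OF ksum, where C = "1/\<delta>"])
    fix k :: int
    have "hh k = - (q k * r (k+1)) / lam k" unfolding hh_def lam_def using nz2[of k] by (simp add: field_simps)
    then have "norm (hh k) = norm (q k * r (k+1)) / norm (lam k)" by (simp add: norm_divide)
    also have "\<dots> \<le> \<kappa> k / \<delta>" by (rule frac_le) (use kqr1[of k] kpos[of k] dpos lamb[of k] in \<open>auto simp: lam_def\<close>)
    finally show "norm (hh k) \<le> 1/\<delta> * \<kappa> k" by simp
  qed
  have ev: "eventually (\<lambda>z::complex. z \<noteq> 0 \<and> norm (inverse (z^2)) * 1 \<le> 1 \<and> norm (inverse (z^2)) * c1 \<le> 1
       \<and> norm (inverse (z^2)) * 4 \<le> \<delta> \<and> norm (inverse (z^2)) * c3 \<le> \<delta> \<and> norm (inverse (z^2)) * Ek \<le> \<delta>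
       \<and> norm (inverse (z^2)) * norm Q \<le> 1/4 \<and> norm (inverse (z^2)) * K \<le> 1/4) at_infinity"
  proof -
    have e2: "eventually (\<lambda>z::complex. norm (inverse (z^2)) * 1 \<le> 1) at_infinity" by (rule ev_small_atinf) auto
    have e3: "eventually (\<lambda>z::complex. norm (inverse (z^2)) * c1 \<le> 1) at_infinity" by (rule ev_small_atinf) (use c1p in auto)
    have e4: "eventually (\<lambda>z::complex. norm (inverse (z^2)) * 4 \<le> \<delta>) at_infinity" by (rule ev_small_atinf) (use dpos in auto)
    have e5: "eventually (\<lambda>z::complex. norm (inverse (z^2)) * c3 \<le> \<delta>) at_infinity" by (rule ev_small_atinf) (use c3p dpos in auto)
    have e6: "eventually (\<lambda>z::complex. norm (inverse (z^2)) * Ek \<le> \<delta>) at_infinity" by (rule ev_small_atinf) (use E0 dpos in auto)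
    have e7: "eventually (\<lambda>z::complex. norm (inverse (z^2)) * norm Q \<le> 1/4) at_infinity" by (rule ev_small_atinf) auto
    have e8: "eventually (\<lambda>z::complex. norm (inverse (z^2)) * K \<le> 1/4) at_infinity" by (rule ev_small_atinf) (use K0 in auto)
    show ?thesis using ev_nz_atinf e2 e3 e4 e5 e6 e7 e8 by eventually_elim blast
  qed
  have main: "norm (Ep * transTbar q r z - 1 + inverse (z^2) * Q) \<le> CF * norm (inverse (z^4))"
    if z: "z \<noteq> 0" and h1: "norm (inverse (z^2)) * 1 \<le> 1" and h2: "norm (inverse (z^2)) * c1 \<le> 1"
       and h3: "norm (inverse (z^2)) * 4 \<le> \<delta>" and h4: "norm (inverse (z^2)) * c3 \<le> \<delta>"
       and h5: "norm (inverse (z^2)) * Ek \<le> \<delta>" and h6: "norm (inverse (z^2)) * norm Q \<le> 1/4"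
       and h7: "norm (inverse (z^2)) * K \<le> 1/4" for z
  proof -
    define v where "v = inverse (z^2)"
    have v1: "norm v \<le> 1" using h1 unfolding v_def by simp
    have vm1: "norm (1 - v) \<le> 2" using v1 norm_triangle_ineq4[of 1 v] by simp
    interpret PI: picard v "\<lambda>n. 1 + q n * r (n+1)" "\<lambda>n. r (n+1)" "\<lambda>n. (1 - v) * q n" "\<lambda>n. - (q n * r (n+1))" \<kappa> \<delta> Ek
    proof
      show "norm ((1 - v) * q n) \<le> \<kappa> n" for n
      proof -
        have "norm ((1 - v) * q n) \<le> 2 * norm (q n)"
          unfolding norm_mult by (rule mult_right_mono[OF vm1]) simp
        then show ?thesis using kq[of n] by simp
      qed
      show "norm v * (2/\<delta> + (2*(1 + 2/\<delta>*Ek)/\<delta>) * Ek) \<le> 1" using h2 unfolding c1_def v_def .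
      show "4 * norm v \<le> \<delta>" using h3 unfolding v_def by simp
      show "2 * norm v * Ek * (1 + 4*Ek/\<delta>) \<le> \<delta>" using h4 unfolding c3_def v_def by (simp add: algebra_simps)
      show "norm v * Ek \<le> \<delta>" using h5 unfolding v_def .
    qed (use kpos ksum Ek_def dpos lamb kr1 kqr1 in auto)
    define p1 where "p1 n = P n * PI.uL n" for n
    define p2 where "p2 n = P n * (v * PI.tL n + r n * PI.uL n)" for n
    have gL: "PI.g PI.xL n = (- (q n * r (n+1)) * PI.uL (n+1) + (1 - v) * q n * PI.tL (n+1)) / (1 + q n * r (n+1))" for n
      unfolding PI.g_def by simp
    have key: "P n * PI.tL n = p2 (n+1)" for n
    proof -
      have "P n * PI.tL n = (1 + q n * r (n+1)) * P (n+1) * ((v * PI.tL (n+1) + r (n+1) * PI.uL (n+1)) / (1 + q n * r (n+1)))"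
        using Prec[of n] PI.tL_fix[of n] by simp
      also have "\<dots> = P (n+1) * (v * PI.tL (n+1) + r (n+1) * PI.uL (n+1))"
        using nz2[of n] by (simp add: field_simps)
      finally show ?thesis unfolding p2_def .
    qed
    have h1': "p1 n = p1 (n+1) + (1 - v) * q n * p2 (n+1)" for n
    proof -
      have "p1 n = (1 + q n * r (n+1)) * P (n+1) * (PI.uL (n+1) + v * ((- (q n * r (n+1)) * PI.uL (n+1) + (1 - v) * q n * PI.tL (n+1)) / (1 + q n * r (n+1))))"
        unfolding p1_def using Prec[of n] PI.uL_rec[of n] gL[of n] by simp
      also have "\<dots> = P (n+1) * ((1 + q n * r (n+1)) * PI.uL (n+1) + v * (- (q n * r (n+1)) * PI.uL (n+1) + (1 - v) * q n * PI.tL (n+1)))"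
        using nz2[of n] by (simp add: field_simps)
      also have "\<dots> = p1 (n+1) + (1 - v) * q n * p2 (n+1)"
        unfolding p1_def p2_def by (simp add: algebra_simps)
      finally show ?thesis .
    qed
    have h2': "p2 n = r n * p1 (n+1) + (v + (1 - v) * q n * r n) * p2 (n+1)" for n
    proof -
      have "p2 n = v * (P n * PI.tL n) + r n * p1 n" unfolding p2_def p1_def by (simp add: algebra_simps)
      also have "\<dots> = v * p2 (n+1) + r n * (p1 (n+1) + (1 - v) * q n * p2 (n+1))" unfolding key h1'[of n] ..
      also have "\<dots> = r n * p1 (n+1) + (v + (1 - v) * q n * r n) * p2 (n+1)" by (simp add: algebra_simps)
      finally show ?thesis .
    qed
    define \<psi> where "\<psi> = (\<lambda>n. z powi (-n) * p1 n, \<lambda>n. z powi (-n) * p2 n)"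
    have sol: "AL_sol q r z \<psi>" unfolding \<psi>_def by (rule AL_from_G[where A = p1 and B = p2, OF z v_def h1' h2'])
    have p1t: "(p1 \<longlongrightarrow> 1) at_top"
      unfolding p1_def using tendsto_mult[OF Ptop PI.uL_top] by simp
    have p2t: "(p2 \<longlongrightarrow> 0) at_top"
    proof -
      have "((\<lambda>n. v * PI.tL n + r n * PI.uL n) \<longlongrightarrow> v * 0 + 0 * 1) at_top"
        by (intro tendsto_add tendsto_mult tendsto_const PI.tL_top PI.uL_top r0t)
      then show ?thesis unfolding p2_def using tendsto_mult[OF Ptop] by fastforce
    qed
    have l1: "((\<lambda>n. z powi n * fst \<psi> n) \<longlongrightarrow> 1) at_top"
      unfolding \<psi>_def fst_conv powi_cancel2[OF z] by (rule p1t)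
    have l2: "((\<lambda>n. z powi n * snd \<psi> n) \<longlongrightarrow> 0) at_top"
      unfolding \<psi>_def snd_conv powi_cancel2[OF z] by (rule p2t)
    have z1: "1 \<le> norm z"
    proof -
      have "inverse (norm z ^ 2) \<le> 1" using v1 unfolding v_def by (simp add: norm_power norm_inverse)
      then have "1 \<le> norm z ^ 2" using z by (simp add: inverse_le_1_iff)
      then show ?thesis using power_le_imp_le_base[of 1 1 "norm z"] by (simp add: numeral_2_eq_2)
    qed
    have psi: "jost_psibar q r z = \<psi>"
      unfolding jost_psibar_def
    proof (rule the_equality)
      show "AL_sol q r z \<psi> \<and> ((\<lambda>n. z powi n * fst \<psi> n) \<longlongrightarrow> 1) at_top \<and> ((\<lambda>n. z powi n * snd \<psi> n) \<longlongrightarrow> 0) at_top"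
        using sol l1 l2 by blast
      fix ab assume ab: "AL_sol q r z ab \<and> ((\<lambda>n. z powi n * fst ab n) \<longlongrightarrow> 1) at_top \<and> ((\<lambda>n. z powi n * snd ab n) \<longlongrightarrow> 0) at_top"
      show "ab = \<psi>"
        using AL_unique_fst[OF z sol _ sbig_large[OF z1] l1 l2, of ab] ab by simp
    qed
    define L where "L = 1 + v * infsum (PI.g PI.xL) UNIV"
    have pb: "(p1 \<longlongrightarrow> Ep * L) at_bot"
      unfolding p1_def L_def by (rule tendsto_mult[OF Pbot PI.uL_bot])
    have "Lim at_bot (\<lambda>n. z powi n * fst (jost_psibar q r z) n) = Ep * L"
      unfolding psi \<psi>_def fst_conv powi_cancel2[OF z] by (rule tendsto_Lim[OF _ pb]) simp
    then have T: "transTbar q r z = 1 / (Ep * L)" unfolding transTbar_def by simp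
    define X where "X k = (- (q k * r (k+1)) + q k * (r (k+1+1) / (1 + q (k+1) * r (k+1+1)))) / (1 + q k * r (k+1))" for k
    have Xs: "X summable_on UNIV"
      unfolding X_def by (rule PI.X_summable[of "\<lambda>n. r (n+1)" q "\<lambda>n. - (q n * r (n+1))"]) (use kr1 qk kqr1 in auto)
    have XQ: "infsum X UNIV = Q"
    proof -
      have eqk: "r (k+2) * (q k - q (k+1) - q k * q (k+1) * r (k+1)) / ((1 + q k * r (k+1)) * (1 + q (k+1) * r (k+2)))
            = X k - hh k + hh (k+1)" for k
      proof -
        have kk: "k + 1 + 1 = k + 2" by simp
        have n1: "1 + q (k+1) * r (k+2) \<noteq> 0" using nz2[of "k+1"] by (simp add: kk)
        have e: "r (k+2) * (q k - q (k+1) - q k * q (k+1) * r (k+1)) =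
          - (q k * r (k+1)) * (1 + q (k+1) * r (k+2)) + q k * r (k+2) - (1 + q (k+1) * r (k+2)) + (1 + q k * r (k+1))"
          by (simp add: algebra_simps)
        show ?thesis unfolding X_def hh_def lam_def kk by (rule algQ[OF nz2[of k] n1 e])
      qed
      have hs1: "(\<lambda>k. hh (k+1)) summable_on UNIV" using hhs shift_summable[of hh 1] by simp
      have d1: "(\<lambda>k. X k - hh k) summable_on UNIV"
        using summable_on_add[OF Xs summable_on_uminus[THEN iffD2, OF hhs]] by simp
      have "Q = infsum (\<lambda>k. (X k - hh k) + hh (k+1)) UNIV"
        unfolding Q_def by (rule infsum_cong) (simp add: eqk)
      also have "\<dots> = infsum (\<lambda>k. X k - hh k) UNIV + infsum (\<lambda>k. hh (k+1)) UNIV"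
        by (rule infsum_add[OF d1 hs1])
      also have "\<dots> = infsum X UNIV - infsum hh UNIV + infsum hh UNIV"
        using infsum_diff_c[OF Xs hhs] shift_infsum[of hh 1] by simp
      finally show ?thesis by simp
    qed
    have "norm (v * infsum (PI.g PI.xL) UNIV - v * infsum X UNIV) \<le> PI.Kx * norm v ^ 2"
      unfolding X_def
    proof (rule PI.expansion)
      show "norm ((1 - v) * q n - q n) \<le> norm v * \<kappa> n" for n
      proof -
        have "norm ((1 - v) * q n - q n) = norm v * norm (q n)" by (simp add: algebra_simps norm_mult)
        also have "\<dots> \<le> norm v * \<kappa> n" by (rule mult_left_mono[OF qk norm_ge_zero])
        finally show ?thesis .
      qed
    qed (use qk kpos in auto)
    then have rho: "norm (v * infsum (PI.g PI.xL) UNIV - v * Q) \<le> K * norm v ^ 2"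
      unfolding XQ K_def by (rule order_trans) (intro mult_right_mono, auto)
    define \<rho> where "\<rho> = v * infsum (PI.g PI.xL) UNIV - v * Q"
    have Lr: "L = 1 + v * Q + \<rho>" unfolding L_def \<rho>_def by simp
    have fb: "norm (1 / (1 + v * Q + \<rho>) - 1 + v * Q) \<le> 2*(K + norm Q^2 + norm Q * K) * norm v ^ 2"
      by (rule final_bound) (use rho h6 h7 v1 K0 in \<open>auto simp: \<rho>_def v_def norm_mult mult_ac\<close>)
    have eqR: "Ep * transTbar q r z - 1 + inverse (z^2) * Q = 1 / (1 + v * Q + \<rho>) - 1 + v * Q"
      unfolding T Lr[symmetric] v_def[symmetric] using E0' by simp
    have nv: "norm v ^ 2 = norm (inverse (z^4))" unfolding v_def by (simp add: norm_power norm_inverse power_inverse)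
    show ?thesis unfolding eqR CF_def nv[symmetric] by (rule fb)
  qed
  define R where "R z = Ep * transTbar q r z - 1 + inverse (z^2) * Q" for z
  have "R \<in> O[at_infinity](\<lambda>z. inverse (z ^ 4))"
  proof (rule bigoI)
    show "eventually (\<lambda>z. norm (R z) \<le> CF * norm (inverse (z ^ 4))) at_infinity"
      using ev by eventually_elim (use main in \<open>auto simp: R_def\<close>)
  qed
  moreover have "\<forall>\<^sub>F z in at_infinity. transTbar q r z = (1 - inverse (z\<^sup>2) * Q + R z) / Ep"
    by (rule always_eventually) (use E0' in \<open>auto simp: R_def field_simps\<close>)
  ultimately show ?thesis by blast
qed


theorem proposition2p7:
  fixes q r :: "int \<Rightarrow> complex"
  assumes q_decay: "\<And>k::nat. ((\<lambda>n. of_int n ^ k * q n) \<longlongrightarrow> 0) at_top"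
                   "\<And>k::nat. ((\<lambda>n. of_int n ^ k * q n) \<longlongrightarrow> 0) at_bot"
      and r_decay: "\<And>k::nat. ((\<lambda>n. of_int n ^ k * r n) \<longlongrightarrow> 0) at_top"
                   "\<And>k::nat. ((\<lambda>n. of_int n ^ k * r n) \<longlongrightarrow> 0) at_bot"
      and nz1: "\<And>n. 1 - q n * r n \<noteq> 0"
      and nz2: "\<And>n. 1 + q n * r (n+1) \<noteq> 0"
  defines "D \<equiv> int_prod (\<lambda>j. 1 - q j * r j)"
      and "E \<equiv> int_prod (\<lambda>j. 1 + q j * r (j+1))"
      and "S \<equiv> (\<Sum>\<^sub>\<infinity>k::int. r k * (q k - q (k+1) - q k * q (k+1) * r (k+1))
                 / ((1 - q k * r k) * (1 - q (k+1) * r (k+1))))"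
      and "Q \<equiv> (\<Sum>\<^sub>\<infinity>k::int. r (k+2) * (q k - q (k+1) - q k * q (k+1) * r (k+1))
                 / ((1 + q k * r (k+1)) * (1 + q (k+1) * r (k+2))))"
  shows "(\<exists>R. R \<in> O[at 0](\<lambda>z. z ^ 4) \<and>
           (\<forall>\<^sub>F z in at 0. transT q r z = (1 - z\<^sup>2 * S + R z) / D))
         \<and> (\<exists>R. R \<in> O[at_infinity](\<lambda>z. inverse (z ^ 4)) \<and>
           (\<forall>\<^sub>F z in at_infinity. transTbar q r z = (1 - inverse (z\<^sup>2) * Q + R z) / E))"
proof -
  have q0t: "(q \<longlongrightarrow> 0) at_top" using q_decay(1)[of 0] by simp
  have q0b: "(q \<longlongrightarrow> 0) at_bot" using q_decay(2)[of 0] by simp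
  have r0t: "(r \<longlongrightarrow> 0) at_top" using r_decay(1)[of 0] by simp
  have r0b: "(r \<longlongrightarrow> 0) at_bot" using r_decay(2)[of 0] by simp
  have sq: "(\<lambda>n. norm (q n)) summable_on UNIV" by (rule decay_summable[OF q_decay(1)[of 2] q_decay(2)[of 2]])
  have sr: "(\<lambda>n. norm (r n)) summable_on UNIV" by (rule decay_summable[OF r_decay(1)[of 2] r_decay(2)[of 2]])
  have sr1: "(\<lambda>n. norm (r (n+1))) summable_on UNIV" using sr shift_summable[of "\<lambda>n. norm (r n)" 1] by simp
  define Qs where "Qs = infsum (\<lambda>n. norm (q n)) UNIV"
  have qb: "norm (q n) \<le> Qs" for n unfolding Qs_def by (rule term_le_sum[OF sq]) simp
  have Qs0: "0 \<le> Qs" using qb[of 0] norm_ge_zero[of "q 0"] by linarith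
  define \<kappa> where "\<kappa> n = (2 + Qs) * (norm (q n) + norm (r n) + norm (r (n+1)))" for n
  have kpos: "0 \<le> \<kappa> n" for n unfolding \<kappa>_def using Qs0 by simp
  have ksum: "\<kappa> summable_on UNIV"
    unfolding \<kappa>_def by (intro summable_on_cmult_right summable_on_add sq sr sr1)
  have X: "norm (q n) + norm (r n) + norm (r (n+1)) \<le> \<kappa> n" for n
  proof -
    have "1 * (norm (q n) + norm (r n) + norm (r (n+1))) \<le> (2 + Qs) * (norm (q n) + norm (r n) + norm (r (n+1)))"
      by (rule mult_right_mono) (use Qs0 in auto)
    then show ?thesis unfolding \<kappa>_def by simp
  qed
  have kq: "2 * norm (q n) \<le> \<kappa> n" for n
  proof -
    have "2 * norm (q n) \<le> 2 * (norm (q n) + norm (r n) + norm (r (n+1)))" by simp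
    also have "\<dots> \<le> (2 + Qs) * (norm (q n) + norm (r n) + norm (r (n+1)))"
      by (rule mult_right_mono) (use Qs0 in auto)
    finally show ?thesis unfolding \<kappa>_def .
  qed
  have kr: "norm (r n) \<le> \<kappa> n" for n using X[of n] norm_ge_zero[of "q n"] norm_ge_zero[of "r (n+1)"] by linarith
  have kr1: "norm (r (n+1)) \<le> \<kappa> n" for n using X[of n] norm_ge_zero[of "q n"] norm_ge_zero[of "r n"] by linarith
  have kqr: "norm (q n * r n) \<le> \<kappa> n" for n
  proof -
    have "norm (q n * r n) \<le> Qs * (norm (q n) + norm (r n) + norm (r (n+1)))"
      unfolding norm_mult by (intro mult_mono qb) (use Qs0 in auto)
    also have "\<dots> \<le> \<kappa> n" unfolding \<kappa>_def by (intro mult_right_mono) (use Qs0 in auto)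
    finally show ?thesis .
  qed
  have kqr1: "norm (q n * r (n+1)) \<le> \<kappa> n" for n
  proof -
    have "norm (q n * r (n+1)) \<le> Qs * (norm (q n) + norm (r n) + norm (r (n+1)))"
      unfolding norm_mult by (intro mult_mono qb) (use Qs0 in auto)
    also have "\<dots> \<le> \<kappa> n" unfolding \<kappa>_def by (intro mult_right_mono) (use Qs0 in auto)
    finally show ?thesis .
  qed
  have P1: "\<exists>R. R \<in> O[at 0](\<lambda>z. z ^ 4) \<and> (\<forall>\<^sub>F z in at 0. transT q r z = (1 - z\<^sup>2 * S + R z) / D)"
    by (rule partF[OF kpos ksum kq kr kqr q0t q0b r0t r0b nz1]) (simp_all add: D_def S_def)
  have P2: "\<exists>R. R \<in> O[at_infinity](\<lambda>z. inverse (z ^ 4)) \<and>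
           (\<forall>\<^sub>F z in at_infinity. transTbar q r z = (1 - inverse (z\<^sup>2) * Q + R z) / E)"
    by (rule partG[OF kpos ksum kq kr1 kqr1 q0t q0b r0t r0b nz2]) (simp_all add: E_def Q_def)
  show ?thesis using P1 P2 by blast
qed


end
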